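(* Let $\mathbb{T}=\mathbb{R}/2\pi\mathbb{Z}$. For $j=1,\dots,m$ let $c_j\in C^\infty(\mathbb{T};\mathbb{C})$ and let $P_j(D_x)$ be a pseudo-differential operator on $\mathbb{T}^n$, $P_j(D_x)u(x)=\sum_{\xi\in\mathbb{Z}^n}e^{ix\cdot\xi}p_j(\xi)\widehat{u}(\xi)$, with $|p_j(\xi)|\le C|\xi|^{\nu_j}$ for all $\xi\in\mathbb{Z}^n$ (some $C>0$, $\nu_j\in\mathbb{R}$). Let $L_j=D_t+c_j(t)P_j(D_x)$, $L=\prod_{j=1}^mL_j=L_1\circ\cdots\circ L_m$, $c_{0,j}=(2\pi)^{-1}\int_0^{2\pi}c_j(t)\,dt$ and $L_0=\prod_{j=1}^m(D_t+c_{0,j}P_j(D_x))$, all acting on $\mathbb{T}^{n+1}=\mathbb{T}_t\times\mathbb{T}^n_x$. Assume $[L_j,L_k]=L_jL_k-L_kL_j=0$ for all $j,k\in\{1,\dots,m\}$. Then: (a) $L$ is globally hypoelliptic if and only if every $L_k$ is globally hypoelliptic; (b) if $L$ is globally hypoelliptic, then $L_0$ is globally hypoelliptic.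
   Context: $D_t=-i\partial_t$; $\widehat{u}(\xi)=(2\pi)^{-n}\int_{\mathbb{T}^n}e^{-ix\cdot\xi}u(x)\,dx$. An operator $\mathcal{P}$ on $\mathbb{T}^N$ is globally hypoelliptic if $u\in\mathcal{D}'(\mathbb{T}^N)$ and $\mathcal{P}u\in C^\infty(\mathbb{T}^N)$ imply $u\in C^\infty(\mathbb{T}^N)$. *)

theory Defs
  imports "HOL-Analysis.Analysis"
begin

text \<open>Distributions on the torus T^(n+1) = T_t x T^n_x are represented by their
Fourier coefficient families u : Z x Z^n -> C, with
u(tau,xi) = (2 pi)^(-(n+1)) * integral of exp(-i(t tau + x.xi)) u(t,x).
D'(T^(n+1)) corresponds exactly to families of at most polynomial growth,
C^infinity(T^(n+1)) to rapidly decreasing families.\<close>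

type_synonym 'n coeffs = "int \<times> (int ^ 'n) \<Rightarrow> complex"

definition inorm :: "int ^ ('n::finite) \<Rightarrow> real" where
  "inorm \<xi> = sqrt (\<Sum>i\<in>UNIV. (real_of_int (\<xi> $ i))^2)"

definition knorm :: "int \<times> (int ^ ('n::finite)) \<Rightarrow> real" where
  "knorm k = sqrt ((real_of_int (fst k))^2 + (inorm (snd k))^2)"

definition distr_coeffs :: "('n::finite) coeffs \<Rightarrow> bool" where
  "distr_coeffs u \<longleftrightarrow> (\<exists>C N. \<forall>k. norm (u k) \<le> C * (1 + knorm k) ^ N)"

definition smooth_coeffs :: "('n::finite) coeffs \<Rightarrow> bool" where
  "smooth_coeffs u \<longleftrightarrow> (\<forall>N::nat. \<exists>C. \<forall>k. norm (u k) \<le> C / (1 + knorm k) ^ N)"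

definition glob_hypoelliptic :: "(('n::finite) coeffs \<Rightarrow> ('n::finite) coeffs) \<Rightarrow> bool" where
  "glob_hypoelliptic P \<longleftrightarrow>
     (\<forall>u. distr_coeffs u \<and> smooth_coeffs (P u) \<longrightarrow> smooth_coeffs u)"

definition smooth_periodic :: "(real \<Rightarrow> complex) \<Rightarrow> bool" where
  "smooth_periodic c \<longleftrightarrow> (\<forall>t. c (t + 2 * pi) = c t) \<and>
     (\<exists>D. D 0 = c \<and> (\<forall>k t. (D k has_vector_derivative D (Suc k) t) (at t)))"

definition fcoef :: "(real \<Rightarrow> complex) \<Rightarrow> int \<Rightarrow> complex" where
  "fcoef c k = (1 / (2 * pi)) *
     integral {0..2*pi} (\<lambda>t. exp (- \<i> * of_int k * of_real t) * c t)"

text \<open>The operator D_t + c(t) P(D_x) on the Fourier side: D_t is multiplication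
by tau, P(D_x) multiplication by p(xi), multiplication by c(t) is convolution
in tau with the Fourier coefficients of c.\<close>
definition Lop :: "(real \<Rightarrow> complex) \<Rightarrow> (int ^ ('n::finite) \<Rightarrow> complex) \<Rightarrow> 'n coeffs \<Rightarrow> ('n::finite) coeffs" where
  "Lop c p u = (\<lambda>(\<tau>, \<xi>). of_int \<tau> * u (\<tau>, \<xi>) +
       p \<xi> * infsum (\<lambda>\<sigma>. fcoef c (\<tau> - \<sigma>) * u (\<sigma>, \<xi>)) UNIV)"

fun Lprod :: "(nat \<Rightarrow> ('a \<Rightarrow> 'a)) \<Rightarrow> nat \<Rightarrow> 'a \<Rightarrow> 'a" where
  "Lprod L 0 = id"
| "Lprod L (Suc k) = Lprod L k \<circ> L (Suc k)"

end

theory Submission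
  imports Defs
begin

lemma exp_int_2pi: "exp (- \<i> * of_int k * of_real (2*pi)) = 1"
proof -
  have "- \<i> * of_int k * of_real (2*pi) = \<i> * (of_int (-k) * (of_real pi * 2))" by simp
  then show ?thesis using exp_2pi_1_int by presburger
qed

lemma smooth_periodic_D:
  assumes "smooth_periodic c"
  obtains D where "D 0 = c" "\<And>k t. (D k has_vector_derivative D (Suc k) t) (at t)"
    "\<And>k t. D k (t + 2*pi) = D k t" "\<And>k. continuous_on UNIV (D k)"
proof -
  from assms obtain D where D0: "D 0 = c" and DD: "\<And>k t. (D k has_vector_derivative D (Suc k) t) (at t)"
    and per: "\<forall>t. c (t + 2 * pi) = c t"
    unfolding smooth_periodic_def by blast
  have P: "D k (t + 2*pi) = D k t" for k t
  proof (induction k arbitrary: t)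
    case 0 then show ?case using per D0 by simp
  next
    case (Suc k)
    have eq: "(\<lambda>s. D k (s + 2*pi)) = D k" using Suc by auto
    have "((D k \<circ> (\<lambda>s. s + 2*pi)) has_vector_derivative (1::real) *\<^sub>R D (Suc k) (t + 2*pi)) (at t)"
      by (rule vector_diff_chain_at) (auto intro!: derivative_eq_intros DD)
    then have "(D k has_vector_derivative D (Suc k) (t + 2*pi)) (at t)"
      using eq by (simp add: o_def)
    then show ?case using DD vector_derivative_unique_at by metis
  qed
  have C: "continuous_on UNIV (D k)" for k
    by (meson DD continuous_at_imp_continuous_on has_vector_derivative_continuous)
  show ?thesis using that D0 DD P C by blast
qed

lemma fcoef_deriv:
  fixes f f' :: "real \<Rightarrow> complex"
  assumes d: "\<And>t. (f has_vector_derivative f' t) (at t)"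
    and pf: "\<And>t. f (t + 2*pi) = f t"
    and cf: "continuous_on UNIV f" and cf': "continuous_on UNIV f'"
  shows "fcoef f' k = \<i> * of_int k * fcoef f k"
proof -
  define A where "A = - \<i> * of_int k"
  define e where "e t = exp (t *\<^sub>R A)" for t :: real
  have e_eq: "e t = exp (- \<i> * of_int k * of_real t)" for t
    unfolding e_def A_def by (simp add: scaleR_conv_of_real mult_ac)
  have de: "(e has_vector_derivative A * e t) (at t)" for t
    unfolding e_def by (rule exp_scaleR_has_vector_derivative_left)
  have dg: "((\<lambda>t. e t * f t) has_vector_derivative (e t * f' t + A * e t * f t)) (at t)" for t
    using has_vector_derivative_mult[OF de d] by (simp add: algebra_simps)
  have ce: "continuous_on UNIV e" unfolding e_def by (intro continuous_intros)
  have int1: "(\<lambda>t. e t * f' t) integrable_on {0..2*pi}"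
  proof -
    have "continuous_on UNIV (\<lambda>t. e t * f' t)" by (intro continuous_intros ce cf')
    then show ?thesis by (meson continuous_on_subset integrable_continuous_real subset_UNIV)
  qed
  have int2: "(\<lambda>t. A * e t * f t) integrable_on {0..2*pi}"
  proof -
    have "continuous_on UNIV (\<lambda>t. A * e t * f t)" by (intro continuous_intros ce cf)
    then show ?thesis by (meson continuous_on_subset integrable_continuous_real subset_UNIV)
  qed
  have "((\<lambda>t. e t * f' t + A * e t * f t) has_integral (e (2*pi) * f (2*pi) - e 0 * f 0)) {0..2*pi}"
    by (rule fundamental_theorem_of_calculus) (auto intro: has_vector_derivative_at_within dg)
  moreover have "e (2*pi) * f (2*pi) - e 0 * f 0 = 0"
    using pf[of 0] exp_int_2pi[of k] by (simp add: e_eq)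
  ultimately have "integral {0..2*pi} (\<lambda>t. e t * f' t + A * e t * f t) = 0"
    by (simp add: integral_unique)
  then have "integral {0..2*pi} (\<lambda>t. e t * f' t) + integral {0..2*pi} (\<lambda>t. A * e t * f t) = 0"
    using integral_add[OF int1 int2] by simp
  moreover have "integral {0..2*pi} (\<lambda>t. A * e t * f t) = A * integral {0..2*pi} (\<lambda>t. e t * f t)"
    by (simp add: mult.assoc integral_mult_right)
  ultimately have "integral {0..2*pi} (\<lambda>t. e t * f' t) = - A * integral {0..2*pi} (\<lambda>t. e t * f t)"
    by (simp add: eq_neg_iff_add_eq_0)
  then show ?thesis unfolding fcoef_def e_eq[symmetric] A_def by simp
qed

lemma fcoef_pow:
  assumes "D 0 = c" "\<And>k t. (D k has_vector_derivative D (Suc k) t) (at t)"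
    "\<And>k t. D k (t + 2*pi) = D k t" "\<And>k. continuous_on UNIV (D k)"
  shows "fcoef (D N) k = (\<i> * of_int k) ^ N * fcoef c k"
proof (induction N)
  case 0 then show ?case using assms by simp
next
  case (Suc N)
  have "fcoef (D (Suc N)) k = \<i> * of_int k * fcoef (D N) k"
    by (rule fcoef_deriv) (use assms in auto)
  then show ?case using Suc by simp
qed

lemma fcoef_bounded:
  assumes "continuous_on UNIV f"
  shows "\<exists>B\<ge>0. \<forall>k. norm (fcoef f k) \<le> B"
proof -
  have cc: "continuous_on {0..2*pi} f" using assms continuous_on_subset subset_UNIV by blast
  have "compact (f ` {0..2*pi})"
    by (rule compact_continuous_image[OF cc]) simp
  then have "bounded (f ` {0..2*pi})" by (rule compact_imp_bounded)
  then obtain B where B: "\<And>t. t \<in> {0..2*pi} \<Longrightarrow> norm (f t) \<le> B"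
    unfolding bounded_iff by blast
  have "0 \<in> {0..2*pi}" by simp
  then have "norm (f 0) \<le> B" by (rule B)
  then have B0: "B \<ge> 0" by (meson norm_ge_zero order_trans)
  have "norm (fcoef f k) \<le> B" for k
  proof -
    define g where "g t = exp (- \<i> * of_int k * of_real t) * f t" for t
    have cg: "continuous_on {0..2*pi} g" unfolding g_def by (intro continuous_intros cc)
    then have "g integrable_on {0..2*pi}"
      by (rule integrable_continuous_real)
    then have hi: "(g has_integral integral {0..2*pi} g) {0..2*pi}" by (rule integrable_integral)
    have ng: "norm (g t) \<le> B" if "t \<in> {0..2*pi}" for t
    proof -
      have "- \<i> * of_int k * of_real t = \<i> * of_real (- (of_int k * t))" by simp
      then have "norm (exp (- \<i> * of_int k * of_real t)) = 1"
        by (simp only: norm_exp_i_times)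
      then show ?thesis unfolding g_def using B[OF that] by (simp add: norm_mult)
    qed
    have "norm (integral {0..2*pi} g) \<le> B * Henstock_Kurzweil_Integration.content {0..2*pi}"
      by (rule has_integral_bound_real[OF B0 finite.emptyI hi]) (use ng in auto)
    then have I: "norm (integral {0..2*pi} g) \<le> B * (2*pi)" by simp
    have "norm (fcoef f k) = norm (integral {0..2*pi} g) / (2*pi)"
      unfolding fcoef_def g_def[symmetric] by (simp add: norm_mult norm_divide)
    also have "\<dots> \<le> B * (2*pi) / (2*pi)" using I by (intro divide_right_mono) auto
    finally show ?thesis by simp
  qed
  then show ?thesis using B0 by blast
qed

definition rapid :: "(int \<Rightarrow> 'a::real_normed_vector) \<Rightarrow> bool" where
  "rapid a \<longleftrightarrow> (\<forall>M::nat. \<exists>A. \<forall>k. norm (a k) * (1 + \<bar>real_of_int k\<bar>) ^ M \<le> A)"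

lemma one_plus_pow_le: "(x::real) \<ge> 0 \<Longrightarrow> (1 + x) ^ M \<le> 2 ^ M * (1 + x ^ M)"
proof (cases "x \<le> 1")
  case True
  assume "x \<ge> 0"
  have "(1 + x) ^ M \<le> 2 ^ M" using True \<open>x\<ge>0\<close> by (intro power_mono) auto
  also have "\<dots> \<le> 2 ^ M * (1 + x ^ M)" using \<open>x\<ge>0\<close> by simp
  finally show ?thesis .
next
  case False
  assume "x \<ge> 0"
  have "(1 + x) ^ M \<le> (2 * x) ^ M" using False by (intro power_mono) auto
  also have "\<dots> \<le> 2 ^ M * (1 + x ^ M)" using \<open>x\<ge>0\<close> by (simp add: power_mult_distrib)
  finally show ?thesis .
qed

lemma fcoef_rapid:
  assumes "smooth_periodic c"
  shows "rapid (fcoef c)"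
  unfolding rapid_def
proof
  fix M :: nat
  obtain D where D: "D 0 = c" "\<And>k t. (D k has_vector_derivative D (Suc k) t) (at t)"
    "\<And>k t. D k (t + 2*pi) = D k t" "\<And>k. continuous_on UNIV (D k)"
    using smooth_periodic_D[OF assms] by blast
  obtain B0 where B0: "\<forall>k. norm (fcoef (D 0) k) \<le> B0" using fcoef_bounded D(4) by blast
  obtain BM where BM: "\<forall>k. norm (fcoef (D M) k) \<le> BM" using fcoef_bounded D(4) by blast
  have "norm (fcoef c k) * (1 + \<bar>real_of_int k\<bar>) ^ M \<le> 2 ^ M * (B0 + BM)" for k
  proof -
    have e1: "norm (fcoef c k) \<le> B0" using B0 D(1) by auto
    have "norm (fcoef (D M) k) = \<bar>real_of_int k\<bar> ^ M * norm (fcoef c k)"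
      using fcoef_pow[OF D, of M k] by (simp add: norm_mult norm_power)
    then have e2: "\<bar>real_of_int k\<bar> ^ M * norm (fcoef c k) \<le> BM" using BM by metis
    have "norm (fcoef c k) * (1 + \<bar>real_of_int k\<bar>) ^ M \<le> norm (fcoef c k) * (2 ^ M * (1 + \<bar>real_of_int k\<bar> ^ M))"
      by (intro mult_left_mono one_plus_pow_le) auto
    also have "\<dots> = 2 ^ M * (norm (fcoef c k) + \<bar>real_of_int k\<bar> ^ M * norm (fcoef c k))"
      by (simp add: algebra_simps)
    also have "\<dots> \<le> 2 ^ M * (B0 + BM)" using e1 e2 by (intro mult_left_mono add_mono) auto
    finally show ?thesis .
  qed
  then show "\<exists>A. \<forall>k. norm (fcoef c k) * (1 + \<bar>real_of_int k\<bar>) ^ M \<le> A" by blast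
qed

lemma summable_nat_inv_sq: "(\<lambda>n::nat. 1 / (1 + real n) ^ 2) summable_on UNIV"
proof -
  have "summable (\<lambda>n::nat. inverse (real n ^ 2))" by (rule inverse_power_summable) auto
  then have "summable (\<lambda>n::nat. inverse (real (Suc n) ^ 2))" by (subst summable_Suc_iff)
  then have "summable (\<lambda>n::nat. 1 / (1 + real n) ^ 2)" by (simp add: divide_inverse add.commute)
  then show ?thesis by (rule summable_nonneg_imp_summable_on) auto
qed

lemma summable_int_inv_sq: "(\<lambda>k::int. 1 / (1 + \<bar>real_of_int k\<bar>) ^ 2) summable_on UNIV"
proof -
  let ?f = "\<lambda>k::int. 1 / (1 + \<bar>real_of_int k\<bar>) ^ 2"
  have inj1: "inj_on (int :: nat \<Rightarrow> int) UNIV" by (simp add: inj_on_def)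
  have inj2: "inj_on (\<lambda>n::nat. - int n - 1) UNIV" by (simp add: inj_on_def)
  have s1: "?f summable_on (range int)"
    using summable_on_reindex[OF inj1, of ?f] summable_nat_inv_sq by (simp add: o_def)
  have s2: "?f summable_on (range (\<lambda>n::nat. - int n - 1))"
  proof -
    have "(?f \<circ> (\<lambda>n::nat. - int n - 1)) summable_on UNIV"
    proof -
      have "(\<lambda>n::nat. 1 / (1 + real n) ^ 2 / 1) summable_on UNIV"
        using summable_nat_inv_sq by simp
      moreover have "(?f \<circ> (\<lambda>n::nat. - int n - 1)) n = 1 / (2 + real n) ^ 2" for n
        by (simp add: o_def add.commute) 
      ultimately show ?thesis
        by (intro summable_on_comparison_test[OF summable_nat_inv_sq]) (auto intro!: divide_left_mono power_mono)
    qed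
    then show ?thesis using summable_on_reindex[OF inj2] by blast
  qed
  have "x \<in> range int \<union> range (\<lambda>n::nat. - int n - 1)" for x :: int
  proof (cases "x \<ge> 0")
    case True then have "x = int (nat x)" by simp
    then show ?thesis by blast
  next
    case False then have "x = - int (nat (- x - 1)) - 1" by simp
    then show ?thesis by blast
  qed
  then have eq: "UNIV = range int \<union> range (\<lambda>n::nat. - int n - 1)" by blast
  have "?f summable_on (range int \<union> range (\<lambda>n::nat. - int n - 1))" by (rule summable_on_union[OF s1 s2])
  then show ?thesis by (simp only: eq[symmetric])
qed

lemma rapid_wsum:
  assumes "rapid a"
  shows "(\<lambda>k. (1 + \<bar>real_of_int k\<bar>) ^ M * norm (a k)) summable_on UNIV"
proof -
  obtain A where A: "\<forall>k. norm (a k) * (1 + \<bar>real_of_int k\<bar>) ^ (M + 2) \<le> A"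
    using assms unfolding rapid_def by blast
  have "(\<lambda>k::int. A * (1 / (1 + \<bar>real_of_int k\<bar>) ^ 2)) summable_on UNIV"
    using summable_int_inv_sq by (rule summable_on_cmult_right)
  moreover have "(1 + \<bar>real_of_int k\<bar>) ^ M * norm (a k) \<le> A * (1 / (1 + \<bar>real_of_int k\<bar>) ^ 2)" for k
  proof -
    have p: "(1 + \<bar>real_of_int k\<bar>) ^ 2 > 0" by simp
    have "(1 + \<bar>real_of_int k\<bar>) ^ M * norm (a k) * (1 + \<bar>real_of_int k\<bar>) ^ 2 \<le> A"
      using A[rule_format, of k] by (simp add: power_add power2_eq_square mult_ac)
    then show ?thesis using p by (simp add: pos_le_divide_eq)
  qed
  ultimately show ?thesis
    by (rule summable_on_comparison_test) auto
qed

section \<open>Convolution on Z\<close>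

definition l1 :: "(int \<Rightarrow> 'a::real_normed_vector) \<Rightarrow> bool" where
  "l1 a \<longleftrightarrow> (\<lambda>k. norm (a k)) summable_on UNIV"

definition nrm :: "(int \<Rightarrow> 'a::real_normed_vector) \<Rightarrow> real" where
  "nrm a = infsum (\<lambda>k. norm (a k)) UNIV"

definition conv :: "(int \<Rightarrow> 'a::real_normed_field) \<Rightarrow> (int \<Rightarrow> 'a) \<Rightarrow> int \<Rightarrow> 'a" where
  "conv a b t = infsum (\<lambda>s. a (t - s) * b s) UNIV"

lemma nrm_nonneg: "nrm a \<ge> 0"
  unfolding nrm_def by (rule infsum_nonneg) auto

lemma norm_le_nrm:
  assumes "l1 a" shows "norm (a k) \<le> nrm a"
proof -
  have "infsum (\<lambda>k. norm (a k)) {k} \<le> infsum (\<lambda>k. norm (a k)) UNIV"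
    by (rule infsum_mono_neutral) (use assms in \<open>auto simp: l1_def\<close>)
  then show ?thesis by (simp add: nrm_def)
qed

lemma summable_real_Sigma_D:
  fixes f :: "'a \<times> 'b \<Rightarrow> real"
  assumes "f summable_on UNIV" "\<And>z. f z \<ge> 0"
  shows "\<And>x. (\<lambda>y. f (x, y)) summable_on UNIV"
    and "(\<lambda>x. infsum (\<lambda>y. f (x, y)) UNIV) summable_on UNIV"
    and "infsum (\<lambda>x. infsum (\<lambda>y. f (x, y)) UNIV) UNIV = infsum f UNIV"
proof -
  have S: "f summable_on Sigma UNIV (\<lambda>_. UNIV)" using assms by (simp add: UNIV_Times_UNIV)
  have "(\<lambda>(x,y). f (x, y)) summable_on Sigma UNIV (\<lambda>_. UNIV)" using S by simp
  from summable_on_SigmaD1[OF this] show I: "(\<lambda>y. f (x, y)) summable_on UNIV" for x by simp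
  show "(\<lambda>x. infsum (\<lambda>y. f (x, y)) UNIV) summable_on UNIV"
    using summable_on_SigmaD[OF S] I by simp
  show "infsum (\<lambda>x. infsum (\<lambda>y. f (x, y)) UNIV) UNIV = infsum f UNIV"
    using infsum_Sigma_banach[OF S] by (simp add: UNIV_Times_UNIV)
qed

lemma summable_real_SigmaI:
  fixes f :: "'a \<times> 'b \<Rightarrow> real"
  assumes "\<And>x. ((\<lambda>y. f (x, y)) has_sum g x) UNIV" "g summable_on UNIV" "\<And>z. f z \<ge> 0"
  shows "f summable_on UNIV"
proof -
  have "f summable_on Sigma UNIV (\<lambda>_. UNIV)"
    by (rule summable_on_SigmaI) (use assms in auto)
  then show ?thesis by (simp add: UNIV_Times_UNIV)
qed

lemma prod_abs_summable:
  fixes a :: "'c \<Rightarrow> 'a::real_normed_field" and b :: "'d \<Rightarrow> 'a"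
  assumes "(\<lambda>k. norm (a k)) summable_on UNIV" "(\<lambda>k. norm (b k)) summable_on UNIV"
  shows "(\<lambda>z. norm (a (fst z) * b (snd z))) summable_on UNIV"
proof (rule summable_real_SigmaI)
  show "((\<lambda>y. norm (a (fst (x, y)) * b (snd (x, y)))) has_sum norm (a x) * infsum (\<lambda>k. norm (b k)) UNIV) UNIV" for x
    using has_sum_cmult_right[OF has_sum_infsum[OF assms(2)], of "norm (a x)"] by (simp add: norm_mult)
  show "(\<lambda>x. norm (a x) * infsum (\<lambda>k. norm (b k)) UNIV) summable_on UNIV"
    using summable_on_cmult_left[OF assms(1)] by simp
qed auto

lemma shear_inj: "inj (\<lambda>z::int \<times> int. (fst z - snd z, snd z))"
  by (auto simp: inj_on_def)

lemma shear_surj: "(\<lambda>z::int \<times> int. (fst z - snd z, snd z)) ` UNIV = UNIV"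
proof -
  have "(x, y) = (\<lambda>z::int \<times> int. (fst z - snd z, snd z)) (x + y, y)" for x y :: int by simp
  then show ?thesis by (metis (no_types, lifting) UNIV_eq_I rangeI surj_pair)
qed

lemma conv_abs_summable:
  fixes a b :: "int \<Rightarrow> 'a::real_normed_field"
  assumes "l1 a" "l1 b"
  shows "(\<lambda>z. norm (a (fst z - snd z) * b (snd z))) summable_on UNIV"
proof -
  let ?h = "\<lambda>z::int \<times> int. (fst z - snd z, snd z)"
  have "(\<lambda>z. norm (a (fst z) * b (snd z))) summable_on UNIV"
    using prod_abs_summable assms unfolding l1_def by blast
  then have "(\<lambda>z. norm (a (fst z) * b (snd z))) summable_on (?h ` UNIV)" by (simp only: shear_surj)
  then have "((\<lambda>z. norm (a (fst z) * b (snd z))) \<circ> ?h) summable_on UNIV"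
    using summable_on_reindex[OF shear_inj] by blast
  then show ?thesis by (simp add: o_def)
qed

lemma conv_abs_infsum:
  fixes a b :: "int \<Rightarrow> 'a::real_normed_field"
  assumes "l1 a" "l1 b"
  shows "infsum (\<lambda>z. norm (a (fst z - snd z) * b (snd z))) UNIV = nrm a * nrm b"
proof -
  let ?h = "\<lambda>z::int \<times> int. (fst z - snd z, snd z)"
  have S: "(\<lambda>z. norm (a (fst z) * b (snd z))) summable_on UNIV"
    using prod_abs_summable assms unfolding l1_def by blast
  have "infsum (\<lambda>z. norm (a (fst z - snd z) * b (snd z))) UNIV
      = infsum ((\<lambda>z. norm (a (fst z) * b (snd z))) \<circ> ?h) UNIV" by (simp add: o_def)
  also have "\<dots> = infsum (\<lambda>z. norm (a (fst z) * b (snd z))) (?h ` UNIV)"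
    by (rule infsum_reindex[OF shear_inj, symmetric])
  also have "\<dots> = infsum (\<lambda>z. norm (a (fst z) * b (snd z))) UNIV" by (simp only: shear_surj)
  also have "\<dots> = infsum (\<lambda>x. infsum (\<lambda>y. norm (a x) * norm (b y)) UNIV) UNIV"
    using summable_real_Sigma_D(3)[OF S] by (simp add: norm_mult)
  also have "\<dots> = infsum (\<lambda>x. norm (a x) * nrm b) UNIV"
    by (simp add: infsum_cmult_right' nrm_def)
  also have "\<dots> = nrm a * nrm b"
    by (simp add: infsum_cmult_left' nrm_def)
  finally show ?thesis .
qed

lemma conv_summable:
  fixes a b :: "int \<Rightarrow> 'a::{real_normed_field,banach}"
  assumes "l1 a" "l1 b"
  shows "(\<lambda>s. norm (a (t - s) * b s)) summable_on UNIV"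
    and "(\<lambda>s. a (t - s) * b s) summable_on UNIV"
proof -
  show 1: "(\<lambda>s. norm (a (t - s) * b s)) summable_on UNIV"
    using summable_real_Sigma_D(1)[OF conv_abs_summable[OF assms]] by simp
  show "(\<lambda>s. a (t - s) * b s) summable_on UNIV"
    using 1 by (rule abs_summable_summable)
qed

lemma l1_conv:
  fixes a b :: "int \<Rightarrow> 'a::{real_normed_field,banach}"
  assumes "l1 a" "l1 b"
  shows "l1 (conv a b)" and "nrm (conv a b) \<le> nrm a * nrm b"
proof -
  let ?F = "\<lambda>z. norm (a (fst z - snd z) * b (snd z))"
  have S: "?F summable_on UNIV" by (rule conv_abs_summable[OF assms])
  have S2: "(\<lambda>t. infsum (\<lambda>s. norm (a (t - s) * b s)) UNIV) summable_on UNIV"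
    using summable_real_Sigma_D(2)[OF S] by simp
  have le: "norm (conv a b t) \<le> infsum (\<lambda>s. norm (a (t - s) * b s)) UNIV" for t
    unfolding conv_def by (rule norm_infsum_bound) (use conv_summable(1)[OF assms] in simp)
  show "l1 (conv a b)" unfolding l1_def
    by (rule summable_on_comparison_test[OF S2]) (use le in auto)
  have "nrm (conv a b) \<le> infsum (\<lambda>t. infsum (\<lambda>s. norm (a (t - s) * b s)) UNIV) UNIV"
    unfolding nrm_def
    by (rule infsum_mono[OF _ S2]) (use le \<open>l1 (conv a b)\<close> in \<open>auto simp: l1_def\<close>)
  also have "\<dots> = infsum ?F UNIV" using summable_real_Sigma_D(3)[OF S] by simp
  also have "\<dots> = nrm a * nrm b" by (rule conv_abs_infsum[OF assms])
  finally show "nrm (conv a b) \<le> nrm a * nrm b" .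
qed

lemma infsum_conv:
  fixes a b :: "int \<Rightarrow> 'a::{real_normed_field,banach}"
  assumes "l1 a" "l1 b"
  shows "infsum (conv a b) UNIV = infsum a UNIV * infsum b UNIV"
proof -
  let ?h = "\<lambda>z::int \<times> int. (fst z - snd z, snd z)"
  have Sa: "(\<lambda>z. a (fst z - snd z) * b (snd z)) summable_on UNIV"
    by (rule abs_summable_summable) (rule conv_abs_summable[OF assms])
  have Sp: "(\<lambda>z. a (fst z) * b (snd z)) summable_on UNIV"
    by (rule abs_summable_summable) (use prod_abs_summable assms in \<open>auto simp: l1_def\<close>)
  have sa: "a summable_on UNIV" "b summable_on UNIV"
    using assms abs_summable_summable unfolding l1_def by blast+
  have "infsum (conv a b) UNIV = infsum (\<lambda>t. infsum (\<lambda>s. a (t - s) * b s) UNIV) UNIV"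
    unfolding conv_def ..
  also have "\<dots> = infsum (\<lambda>z. a (fst z - snd z) * b (snd z)) (Sigma UNIV (\<lambda>_. UNIV))"
    using infsum_Sigma_banach[of "\<lambda>z. a (fst z - snd z) * b (snd z)" UNIV "\<lambda>_. UNIV"] Sa
    by (simp add: UNIV_Times_UNIV)
  also have "\<dots> = infsum ((\<lambda>z. a (fst z) * b (snd z)) \<circ> ?h) UNIV" by (simp add: o_def UNIV_Times_UNIV)
  also have "\<dots> = infsum (\<lambda>z. a (fst z) * b (snd z)) (?h ` UNIV)"
    by (rule infsum_reindex[OF shear_inj, symmetric])
  also have "\<dots> = infsum (\<lambda>z. a (fst z) * b (snd z)) (Sigma UNIV (\<lambda>_. UNIV))" by (simp only: shear_surj UNIV_Times_UNIV)
  also have "\<dots> = infsum (\<lambda>x. infsum (\<lambda>y. a x * b y) UNIV) UNIV"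
    using infsum_Sigma_banach[of "\<lambda>z. a (fst z) * b (snd z)" UNIV "\<lambda>_. UNIV"] Sp
    by (simp add: UNIV_Times_UNIV)
  also have "\<dots> = infsum (\<lambda>x. a x * infsum b UNIV) UNIV"
    by (simp add: infsum_cmult_right')
  also have "\<dots> = infsum a UNIV * infsum b UNIV"
    by (simp add: infsum_cmult_left')
  finally show ?thesis .
qed

lemma shift_image: "(\<lambda>s::int. s + c) ` UNIV = UNIV"
  by (metis surj_plus_right)

lemma summable_shift: "(\<lambda>s::int. f (s + c)) summable_on UNIV \<longleftrightarrow> f summable_on UNIV"
proof -
  have "inj (\<lambda>s::int. s + c)" by (simp add: inj_on_def)
  from summable_on_reindex[OF this, of f] show ?thesis by (simp add: shift_image o_def)
qed

lemma infsum_shift: "infsum (\<lambda>s::int. f (s + c)) UNIV = infsum f UNIV"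
proof -
  have "inj (\<lambda>s::int. s + c)" by (simp add: inj_on_def)
  from infsum_reindex[OF this, of f] show ?thesis by (simp add: shift_image o_def)
qed

lemma infsum_reflect: "infsum (\<lambda>s::int. f (t - s)) UNIV = infsum f UNIV"
proof -
  have i: "inj (\<lambda>s::int. t - s)" by (simp add: inj_on_def)
  have "surj (\<lambda>s::int. t - s)" by (rule surjI[of _ "\<lambda>s. t - s"]) simp
  with infsum_reindex[OF i, of f] show ?thesis by (simp add: o_def)
qed

lemma conv_comm: "conv a b t = conv b a t"
proof -
  have "conv a b t = infsum (\<lambda>s. a (t - s) * b s) UNIV" by (simp add: conv_def)
  also have "\<dots> = infsum (\<lambda>s. a (t - (t - s)) * b (t - s)) UNIV"
    by (rule infsum_reflect[symmetric, where f = "\<lambda>s. a (t - s) * b s"])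
  also have "\<dots> = conv b a t" by (simp add: conv_def mult.commute)
  finally show ?thesis .
qed

lemma conv_cmult_right: "conv a (\<lambda>k. c * b k) t = c * conv a b t"
  unfolding conv_def by (simp add: mult.left_commute infsum_cmult_right')

lemma conv_cmult_left: "conv (\<lambda>k. c * a k) b t = c * conv a b t"
  unfolding conv_def by (simp add: mult.assoc infsum_cmult_right')

lemma conv_add_left:
  fixes a a' b :: "int \<Rightarrow> 'a::{real_normed_field,banach}"
  assumes "l1 a" "l1 a'" "l1 b"
  shows "conv (\<lambda>k. a k + a' k) b t = conv a b t + conv a' b t"
  unfolding conv_def
  using infsum_add[OF conv_summable(2)[OF assms(1,3)] conv_summable(2)[OF assms(2,3)]]
  by (simp add: distrib_right)

definition delta :: "int \<Rightarrow> 'a::real_normed_field" where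
  "delta k = (if k = 0 then 1 else 0)"

lemma infsum_single_point:
  assumes "\<And>s. s \<noteq> t \<Longrightarrow> f s = 0"
  shows "infsum f UNIV = f t"
proof -
  have "infsum f UNIV = infsum f {t}"
    by (rule infsum_cong_neutral) (use assms in auto)
  then show ?thesis by simp
qed

lemma conv_delta_right: "conv a delta t = a t"
  unfolding conv_def delta_def by (subst infsum_single_point[where t=0]) auto

lemma conv_delta_left: "conv delta a t = a t"
  by (simp add: conv_comm[of delta] conv_delta_right)

lemma l1_delta: "l1 (delta :: int \<Rightarrow> 'a::real_normed_field)" and nrm_delta: "nrm (delta :: int \<Rightarrow> 'a::real_normed_field) = 1"
proof -
  have "finite {k \<in> UNIV. norm (delta k :: 'a) \<noteq> 0}"
    by (rule finite_subset[of _ "{0}"]) (auto simp: delta_def)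
  then show "l1 (delta :: int \<Rightarrow> 'a)" unfolding l1_def
    by (rule finite_nonzero_values_imp_summable_on)
  show "nrm (delta :: int \<Rightarrow> 'a) = 1" unfolding nrm_def
    by (subst infsum_single_point[where t=0]) (auto simp: delta_def)
qed

lemma conv_assoc:
  fixes a b x :: "int \<Rightarrow> 'a::{real_normed_field,banach}"
  assumes a: "l1 a" and b: "l1 b" and x: "l1 x"
  shows "conv a (conv b x) t = conv (conv a b) x t"
proof -
  define F where "F z = a (t - snd z) * b (snd z - fst z) * x (fst z)" for z :: "int \<times> int"
  define T where "T r = infsum (\<lambda>s. norm (a (t - s) * b (s - r))) UNIV" for r
  have inner: "(\<lambda>s. norm (a (t - s) * b (s - r))) summable_on UNIV" for r
  proof -
    have "(\<lambda>s. norm (a ((t - r) - s) * b s)) summable_on UNIV" by (rule conv_summable(1)[OF a b])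
    then have "(\<lambda>s. norm (a ((t - r) - (s - r)) * b (s - r))) summable_on UNIV"
      using summable_shift[of "\<lambda>s. norm (a ((t - r) - s) * b s)" "- r"] by simp
    then show ?thesis by simp
  qed
  have Tle: "T r \<le> nrm a * nrm b" for r
  proof -
    have "T r \<le> infsum (\<lambda>s. nrm a * norm (b (s - r))) UNIV"
      unfolding T_def
    proof (rule infsum_mono[OF inner])
      show "(\<lambda>s. nrm a * norm (b (s - r))) summable_on UNIV"
        using b summable_shift[of "\<lambda>s. norm (b s)" "- r"] summable_on_cmult_right unfolding l1_def by force
      show "norm (a (t - s) * b (s - r)) \<le> nrm a * norm (b (s - r))" for s
        using norm_le_nrm[OF a] by (simp add: norm_mult mult_right_mono)
    qed
    also have "\<dots> = nrm a * nrm b"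
      using infsum_shift[of "\<lambda>s. norm (b s)" "- r"] by (simp add: infsum_cmult_right' nrm_def)
    finally show ?thesis .
  qed
  have SF: "(\<lambda>z. norm (F z)) summable_on UNIV"
  proof (rule summable_real_SigmaI)
    show "((\<lambda>s. norm (F (r, s))) has_sum (norm (x r) * T r)) UNIV" for r
      unfolding F_def T_def using has_sum_cmult_left[OF has_sum_infsum[OF inner[of r]], of "norm (x r)"]
      by (simp add: norm_mult mult_ac)
    show "(\<lambda>r. norm (x r) * T r) summable_on UNIV"
    proof (rule summable_on_comparison_test)
      show "(\<lambda>r. norm (x r) * (nrm a * nrm b)) summable_on UNIV"
        using x summable_on_cmult_left unfolding l1_def by blast
      show "norm (x r) * T r \<le> norm (x r) * (nrm a * nrm b)" for r
        using Tle by (simp add: mult_left_mono)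
      show "0 \<le> norm (x r) * T r" for r
        unfolding T_def by (simp add: infsum_nonneg)
    qed
  qed auto
  have SF': "(\<lambda>(r, s). F (r, s)) summable_on UNIV \<times> UNIV"
    using abs_summable_summable[OF SF] by (simp add: UNIV_Times_UNIV)
  have "conv a (conv b x) t = infsum (\<lambda>s. infsum (\<lambda>r. F (r, s)) UNIV) UNIV"
    unfolding conv_def F_def by (simp add: infsum_cmult_right' mult.assoc)
  also have "\<dots> = infsum (\<lambda>r. infsum (\<lambda>s. F (r, s)) UNIV) UNIV"
    using infsum_swap_banach[of "\<lambda>r s. F (r, s)" UNIV UNIV] SF' by simp
  also have "\<dots> = infsum (\<lambda>r. conv a b (t - r) * x r) UNIV"
  proof (rule infsum_cong)
    fix r
    have "infsum (\<lambda>s. F (r, s)) UNIV = infsum (\<lambda>s. a (t - s) * b (s - r)) UNIV * x r"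
      unfolding F_def by (simp add: infsum_cmult_left')
    also have "infsum (\<lambda>s. a (t - s) * b (s - r)) UNIV = infsum (\<lambda>s. a (t - (s + r)) * b (s + r - r)) UNIV"
      using infsum_shift[of "\<lambda>s. a (t - s) * b (s - r)" r] by simp
    also have "\<dots> = conv a b (t - r)" unfolding conv_def by (simp add: algebra_simps)
    finally show "infsum (\<lambda>s. F (r, s)) UNIV = conv a b (t - r) * x r" .
  qed
  also have "\<dots> = conv (conv a b) x t" by (simp add: conv_def)
  finally show ?thesis .
qed

lemma conv_left_comm:
  fixes a b x :: "int \<Rightarrow> 'a::{real_normed_field,banach}"
  assumes "l1 a" "l1 b" "l1 x"
  shows "conv a (conv b x) t = conv b (conv a x) t"
proof -
  have "conv a (conv b x) t = conv (conv a b) x t" by (rule conv_assoc[OF assms])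
  also have "conv a b = conv b a" by (rule ext) (rule conv_comm)
  also have "conv (conv b a) x t = conv b (conv a x) t" by (rule conv_assoc[symmetric]) (use assms in auto)
  finally show ?thesis .
qed

lemma conv_deriv:
  fixes a b :: "int \<Rightarrow> 'a::{real_normed_field,banach}"
  assumes "l1 a" "l1 b" "l1 (\<lambda>k. of_int k * a k)" "l1 (\<lambda>k. of_int k * b k)"
  shows "of_int t * conv a b t = conv (\<lambda>k. of_int k * a k) b t + conv a (\<lambda>k. of_int k * b k) t"
proof -
  have "of_int t * conv a b t = infsum (\<lambda>s. of_int t * (a (t - s) * b s)) UNIV"
    unfolding conv_def by (simp add: infsum_cmult_right')
  also have "\<dots> = infsum (\<lambda>s. of_int (t - s) * a (t - s) * b s + a (t - s) * (of_int s * b s)) UNIV"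
    by (rule infsum_cong) (simp add: algebra_simps)
  also have "\<dots> = conv (\<lambda>k. of_int k * a k) b t + conv a (\<lambda>k. of_int k * b k) t"
    unfolding conv_def
    by (rule infsum_add) (use conv_summable(2)[OF assms(3,2)] conv_summable(2)[OF assms(1,4)] in auto)
  finally show ?thesis .
qed

lemma l1_cmult: "l1 a \<Longrightarrow> l1 (\<lambda>k. c * a k :: 'a::real_normed_field)"
  unfolding l1_def by (simp add: norm_mult summable_on_cmult_right)

lemma l1_zero: "l1 (\<lambda>k. 0 :: 'a::real_normed_vector)"
  unfolding l1_def by simp

lemma norm_conv_le:
  fixes a b :: "int \<Rightarrow> 'a::{real_normed_field,banach}"
  assumes "l1 a" "l1 b"
  shows "norm (conv a b t) \<le> nrm a * nrm b"
  using norm_le_nrm[OF l1_conv(1)[OF assms], of t] l1_conv(2)[OF assms] by linarith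

section \<open>Convolution exponential\<close>

primrec Kpow :: "(int \<Rightarrow> complex) \<Rightarrow> nat \<Rightarrow> int \<Rightarrow> complex" where
  "Kpow C 0 = delta"
| "Kpow C (Suc n) = conv C (Kpow C n)"

lemma Kpow_l1:
  assumes "l1 C"
  shows "l1 (Kpow C n) \<and> nrm (Kpow C n) \<le> nrm C ^ n"
proof (induction n)
  case 0 then show ?case using l1_delta[where 'a=complex] nrm_delta[where 'a=complex] by simp
next
  case (Suc n)
  then have l: "l1 (Kpow C n)" and nK: "nrm (Kpow C n) \<le> nrm C ^ n" by auto
  have "nrm (Kpow C (Suc n)) \<le> nrm C * nrm (Kpow C n)" using l1_conv(2)[OF assms l] by simp
  also have "\<dots> \<le> nrm C * nrm C ^ n" by (intro mult_left_mono nK nrm_nonneg)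
  finally show ?case using l1_conv(1)[OF assms l] by simp
qed

lemma Kpow_deriv:
  assumes C: "l1 C" and d: "l1 d" and Cd: "\<And>k. of_int k * C k = d k"
  shows "l1 (\<lambda>k. of_int k * Kpow C n k) \<and> (\<forall>t. of_int t * Kpow C (Suc n) t = of_nat (Suc n) * conv d (Kpow C n) t)"
proof (induction n)
  case 0
  have "(\<lambda>k. of_int k * Kpow C 0 k) = (\<lambda>k. 0)" by (auto simp: delta_def)
  then have "l1 (\<lambda>k. of_int k * Kpow C 0 k)" using l1_zero by metis
  moreover have "of_int t * Kpow C (Suc 0) t = of_nat (Suc 0) * conv d (Kpow C 0) t" for t
    using Cd[of t] by (simp add: conv_delta_right)
  ultimately show ?case by blast
next
  case (Suc n)
  have lK: "l1 (Kpow C m)" for m using Kpow_l1[OF C] by blast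
  have eqf: "(\<lambda>k. of_int k * Kpow C (Suc n) k) = (\<lambda>k. of_nat (Suc n) * conv d (Kpow C n) k)"
    using Suc by auto
  have l1S: "l1 (\<lambda>k. of_int k * Kpow C (Suc n) k)"
    unfolding eqf by (intro l1_cmult l1_conv(1) d lK)
  have lC: "l1 (\<lambda>k. of_int k * C k)" using d Cd by simp
  have "of_int t * Kpow C (Suc (Suc n)) t = of_nat (Suc (Suc n)) * conv d (Kpow C (Suc n)) t" for t
  proof -
    have "of_int t * Kpow C (Suc (Suc n)) t = of_int t * conv C (Kpow C (Suc n)) t" by simp
    also have "\<dots> = conv (\<lambda>k. of_int k * C k) (Kpow C (Suc n)) t + conv C (\<lambda>k. of_int k * Kpow C (Suc n) k) t"
      by (rule conv_deriv[OF C lK lC l1S])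
    also have "\<dots> = conv d (Kpow C (Suc n)) t + of_nat (Suc n) * conv C (conv d (Kpow C n)) t"
      unfolding eqf conv_cmult_right using Cd by simp
    also have "conv C (conv d (Kpow C n)) t = conv d (Kpow C (Suc n)) t"
      using conv_left_comm[OF C d lK[of n]] by simp
    finally show ?thesis by (simp add: algebra_simps)
  qed
  then show ?case using l1S by blast
qed

lemma Kpow_sum:
  assumes "l1 C"
  shows "infsum (Kpow C n) UNIV = infsum C UNIV ^ n"
proof (induction n)
  case 0
  have "infsum (delta :: int \<Rightarrow> complex) UNIV = 1"
    by (subst infsum_single_point[where t=0]) (auto simp: delta_def)
  then show ?case by simp
next
  case (Suc n)
  then show ?case using infsum_conv[OF assms] Kpow_l1[OF assms] by simp
qed

lemma infsum_nat_suminf: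
  fixes f :: "nat \<Rightarrow> 'a::banach"
  assumes "summable (\<lambda>n. norm (f n))"
  shows "infsum f UNIV = suminf f"
  using norm_summable_imp_has_sum[OF assms summable_sums[OF summable_norm_cancel[OF assms]]]
  by (rule infsumI)

lemma summable_on_nat_real:
  fixes f :: "nat \<Rightarrow> real"
  assumes "summable f" "\<And>n. f n \<ge> 0"
  shows "f summable_on UNIV"
  using summable_nonneg_imp_summable_on[OF assms] .

lemma summable_reflect: "(\<lambda>s::int. f (t - s)) summable_on UNIV \<longleftrightarrow> f summable_on UNIV"
proof -
  have i: "inj (\<lambda>s::int. t - s)" by (simp add: inj_on_def)
  have "surj (\<lambda>s::int. t - s)" by (rule surjI[of _ "\<lambda>s. t - s"]) simp
  with summable_on_reindex[OF i, of f] show ?thesis by (simp add: o_def)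
qed

lemma Eexp_exists:
  fixes C d :: "int \<Rightarrow> complex" and q :: complex
  assumes C: "l1 C" and d: "l1 d" and Cd: "\<And>k. of_int k * C k = d k"
  shows "\<exists>E. l1 E \<and> (\<forall>t. of_int t * E t = - q * conv d E t) \<and> (\<exists>t. E t \<noteq> 0)"
proof -
  define \<alpha> where "\<alpha> n = (- q) ^ n /\<^sub>R fact n" for n
  define M where "M = nrm C"
  define \<beta> where "\<beta> n = (norm q * M) ^ n / fact n" for n
  have M0: "M \<ge> 0" unfolding M_def by (rule nrm_nonneg)
  have n\<alpha>: "norm (\<alpha> n) = norm q ^ n / fact n" for n
    unfolding \<alpha>_def by (simp add: norm_power divide_inverse mult.commute)
  have lK: "l1 (Kpow C n)" and nK: "nrm (Kpow C n) \<le> M ^ n" for n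
    using Kpow_l1[OF C] unfolding M_def by auto
  have bnd: "norm (\<alpha> n) * nrm (Kpow C n) \<le> \<beta> n" for n
  proof -
    have "norm (\<alpha> n) * nrm (Kpow C n) \<le> norm (\<alpha> n) * M ^ n" by (intro mult_left_mono nK) auto
    also have "\<dots> = \<beta> n" unfolding n\<alpha> \<beta>_def by (simp add: power_mult_distrib)
    finally show ?thesis .
  qed
  have \<beta>0: "\<beta> n \<ge> 0" for n unfolding \<beta>_def using M0 by simp
  have b_summ: "summable \<beta>"
    using summable_exp[of "norm q * M"] unfolding \<beta>_def by (simp add: divide_inverse mult.commute)
  have \<beta>s: "\<beta> summable_on UNIV" by (rule summable_on_nat_real[OF b_summ \<beta>0])
  define B where "B = infsum \<beta> UNIV"
  define E where "E t = infsum (\<lambda>n. \<alpha> n * Kpow C n t) UNIV" for t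
  define G where "G z = norm (\<alpha> (fst z) * Kpow C (fst z) (snd z))" for z :: "nat \<times> int"
  have G0: "G z \<ge> 0" for z unfolding G_def by simp
  have Gle: "G (n, t) \<le> \<beta> n" for n t
  proof -
    have "G (n, t) = norm (\<alpha> n) * norm (Kpow C n t)" unfolding G_def by (simp add: norm_mult)
    also have "\<dots> \<le> norm (\<alpha> n) * nrm (Kpow C n)" by (intro mult_left_mono norm_le_nrm lK) auto
    finally show ?thesis using bnd[of n] by linarith
  qed
  have SG: "G summable_on UNIV"
  proof (rule summable_real_SigmaI)
    show "((\<lambda>t. G (n, t)) has_sum (norm (\<alpha> n) * nrm (Kpow C n))) UNIV" for n
      using has_sum_cmult_right[OF has_sum_infsum[OF lK[of n, unfolded l1_def]], of "norm (\<alpha> n)"]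
      unfolding G_def nrm_def by (simp add: norm_mult)
    show "(\<lambda>n. norm (\<alpha> n) * nrm (Kpow C n)) summable_on UNIV"
      by (rule summable_on_comparison_test[OF \<beta>s]) (auto intro!: mult_nonneg_nonneg nrm_nonneg bnd)
  qed (rule G0)
  have SGs: "(\<lambda>z. G (snd z, fst z)) summable_on UNIV"
  proof -
    have "(\<lambda>(x, y). G (y, x)) summable_on UNIV"
      using summable_on_swap[of G UNIV UNIV] SG by (simp add: UNIV_Times_UNIV)
    moreover have "(\<lambda>(x, y). G (y, x)) = (\<lambda>z. G (snd z, fst z))" by auto
    ultimately show ?thesis by simp
  qed
  have Gin: "(\<lambda>n. G (n, t)) summable_on UNIV" for t
    using summable_real_Sigma_D(1)[OF SGs, of t] G0 by simp
  have Gout: "(\<lambda>t. infsum (\<lambda>n. G (n, t)) UNIV) summable_on UNIV"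
    using summable_real_Sigma_D(2)[OF SGs] G0 by simp
  have GinB: "infsum (\<lambda>n. G (n, t)) UNIV \<le> B" for t
    unfolding B_def by (rule infsum_mono[OF Gin[of t] \<beta>s]) (rule Gle)
  have nE: "norm (E t) \<le> infsum (\<lambda>n. G (n, t)) UNIV" for t
  proof -
    have "norm (E t) \<le> infsum (\<lambda>n. norm (\<alpha> n * Kpow C n t)) UNIV"
      unfolding E_def by (rule norm_infsum_bound) (use Gin[unfolded G_def] in simp)
    then show ?thesis unfolding G_def by simp
  qed
  have lE: "l1 E" unfolding l1_def
    by (rule summable_on_comparison_test[OF Gout]) (use nE in auto)
  have eig: "of_int t * E t = - q * conv d E t" for t
  proof -
    define f where "f n = \<alpha> n * (of_int t * Kpow C n t)" for n
    have nf: "norm (f n) \<le> \<bar>of_int t\<bar> * \<beta> n" for n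
    proof -
      have "norm (f n) = \<bar>of_int t\<bar> * G (n, t)" unfolding f_def G_def by (simp add: norm_mult)
      then show ?thesis using Gle[of n t] by (simp add: mult_left_mono)
    qed
    have sf: "summable (\<lambda>n. norm (f n))"
      by (rule summable_comparison_test[of _ "\<lambda>n. \<bar>of_int t\<bar> * \<beta> n"]) (use nf b_summ summable_mult in auto)
    have sc: "summable (\<lambda>n. norm (\<alpha> n * conv d (Kpow C n) t))"
    proof -
    have "norm (\<alpha> n * conv d (Kpow C n) t) \<le> nrm d * \<beta> n" for n
    proof -
      have "norm (\<alpha> n * conv d (Kpow C n) t) \<le> norm (\<alpha> n) * (nrm d * nrm (Kpow C n))"
        unfolding norm_mult by (intro mult_left_mono norm_conv_le d lK) auto
      also have "\<dots> = nrm d * (norm (\<alpha> n) * nrm (Kpow C n))" by simp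
      also have "\<dots> \<le> nrm d * \<beta> n" by (intro mult_left_mono bnd nrm_nonneg)
      finally show ?thesis .
    qed
    note le = this
    show "summable (\<lambda>n. norm (\<alpha> n * conv d (Kpow C n) t))"
      by (rule summable_comparison_test[of _ "\<lambda>n. nrm d * \<beta> n"]) (use le b_summ summable_mult in auto)
    qed
    have "of_int t * E t = infsum f UNIV"
      unfolding E_def f_def by (simp add: infsum_cmult_right'[symmetric] mult_ac)
    also have "\<dots> = suminf f" by (rule infsum_nat_suminf[OF sf])
    also have "\<dots> = f 0 + suminf (\<lambda>n. f (Suc n))"
      using suminf_split_head[OF summable_norm_cancel[OF sf]] by simp
    also have "f 0 = 0" unfolding f_def by (simp add: delta_def)
    also have "(\<lambda>n. f (Suc n)) = (\<lambda>n. - q * (\<alpha> n * conv d (Kpow C n) t))"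
    proof
      fix n
      have "f (Suc n) = \<alpha> (Suc n) * (of_nat (Suc n) * conv d (Kpow C n) t)"
        unfolding f_def using Kpow_deriv[OF C d Cd, of n] by simp
      also have "\<alpha> (Suc n) * of_nat (Suc n) = - q * \<alpha> n"
        unfolding \<alpha>_def by (simp add: scaleR_conv_of_real field_simps del: of_nat_Suc)
      then have "\<alpha> (Suc n) * (of_nat (Suc n) * conv d (Kpow C n) t) = - q * (\<alpha> n * conv d (Kpow C n) t)"
        by (metis mult.assoc)
      finally show "f (Suc n) = - q * (\<alpha> n * conv d (Kpow C n) t)" .
    qed
    also have "suminf (\<lambda>n. - q * (\<alpha> n * conv d (Kpow C n) t)) = - q * suminf (\<lambda>n. \<alpha> n * conv d (Kpow C n) t)"
      by (rule suminf_mult[OF summable_norm_cancel[OF sc]])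
    finally have 1: "of_int t * E t = - q * suminf (\<lambda>n. \<alpha> n * conv d (Kpow C n) t)" by simp
    define H where "H z = d (t - fst z) * (\<alpha> (snd z) * Kpow C (snd z) (fst z))" for z :: "int \<times> nat"
    have SH: "(\<lambda>z. norm (H z)) summable_on UNIV"
    proof (rule summable_real_SigmaI)
      show "((\<lambda>n. norm (H (s, n))) has_sum (norm (d (t - s)) * infsum (\<lambda>n. G (n, s)) UNIV)) UNIV" for s
        using has_sum_cmult_right[OF has_sum_infsum[OF Gin[of s]], of "norm (d (t - s))"]
        unfolding H_def G_def by (simp add: norm_mult)
      show "(\<lambda>s. norm (d (t - s)) * infsum (\<lambda>n. G (n, s)) UNIV) summable_on UNIV"
      proof (rule summable_on_comparison_test)
        show "(\<lambda>s. norm (d (t - s)) * B) summable_on UNIV"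
          using d summable_reflect[of "\<lambda>k. norm (d k)" t] summable_on_cmult_left unfolding l1_def by blast
        show "norm (d (t - s)) * infsum (\<lambda>n. G (n, s)) UNIV \<le> norm (d (t - s)) * B" for s
          by (intro mult_left_mono GinB) auto
        show "0 \<le> norm (d (t - s)) * infsum (\<lambda>n. G (n, s)) UNIV" for s
          using G0 by (simp add: infsum_nonneg)
      qed
    qed auto
    have SH': "(\<lambda>(s, n). H (s, n)) summable_on UNIV \<times> UNIV"
      using abs_summable_summable[OF SH] by (simp add: UNIV_Times_UNIV)
    have "conv d E t = infsum (\<lambda>s. infsum (\<lambda>n. H (s, n)) UNIV) UNIV"
      unfolding conv_def E_def H_def by (simp add: infsum_cmult_right')
    also have "\<dots> = infsum (\<lambda>n. infsum (\<lambda>s. H (s, n)) UNIV) UNIV"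
      using infsum_swap_banach[of "\<lambda>s n. H (s, n)" UNIV UNIV] SH' by simp
    also have "\<dots> = infsum (\<lambda>n. \<alpha> n * conv d (Kpow C n) t) UNIV"
      unfolding H_def conv_def by (simp add: infsum_cmult_right'[symmetric] mult_ac)
    also have "\<dots> = suminf (\<lambda>n. \<alpha> n * conv d (Kpow C n) t)"
      by (rule infsum_nat_suminf[OF sc])
    finally show ?thesis using 1 by simp
  qed
  have nz: "\<exists>t. E t \<noteq> 0"
  proof (rule ccontr)
    assume "\<not> (\<exists>t. E t \<noteq> 0)"
    then have "E = (\<lambda>_. 0)" by auto
    then have E0: "infsum E UNIV = 0" by simp
    define F where "F z = \<alpha> (fst z) * Kpow C (fst z) (snd z)" for z :: "nat \<times> int"
    have SF: "F summable_on UNIV"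
      using abs_summable_summable[of F UNIV] SG unfolding G_def F_def by simp
    have "(\<lambda>(n, t). F (n, t)) = F" by auto
    then have SF': "(\<lambda>(n, t). F (n, t)) summable_on UNIV \<times> UNIV"
      using SF by (simp add: UNIV_Times_UNIV)
    define S where "S = infsum C UNIV"
    have "infsum E UNIV = infsum (\<lambda>t. infsum (\<lambda>n. F (n, t)) UNIV) UNIV"
      unfolding E_def F_def by simp
    also have "\<dots> = infsum (\<lambda>n. infsum (\<lambda>t. F (n, t)) UNIV) UNIV"
      using infsum_swap_banach[of "\<lambda>n t. F (n, t)" UNIV UNIV] SF' by simp
    also have "\<dots> = infsum (\<lambda>n. \<alpha> n * S ^ n) UNIV"
      unfolding F_def S_def by (simp add: infsum_cmult_right' Kpow_sum[OF C])
    also have aS: "(\<lambda>n. \<alpha> n * S ^ n) = (\<lambda>n. (- q * S) ^ n /\<^sub>R fact n)"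
    proof (rule ext)
      fix n
      have "(- q) ^ n * S ^ n = (- q * S) ^ n" by (simp only: power_mult_distrib)
      then show "\<alpha> n * S ^ n = (- q * S) ^ n /\<^sub>R fact n"
        unfolding \<alpha>_def by (simp add: scaleR_conv_of_real mult_ac)
    qed
    also have "infsum (\<lambda>n. (- q * S) ^ n /\<^sub>R fact n) UNIV = suminf (\<lambda>n. (- q * S) ^ n /\<^sub>R fact n)"
    proof (rule infsum_nat_suminf)
      show "summable (\<lambda>n. norm ((- q * S) ^ n /\<^sub>R fact n))"
        using summable_exp[of "norm (- q * S)"]
        by (simp add: norm_power divide_inverse mult.commute)
    qed
    also have "\<dots> = exp (- q * S)"
      by (rule sums_unique[symmetric]) (rule exp_converges)
    finally have "exp (- q * S) = 0" using E0 by simp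
    then show False by simp
  qed
  show ?thesis using lE eig nz by blast
qed

section \<open>Weighted bounds for eigenvectors\<close>

lemma peetre1: "1 + \<bar>real_of_int t\<bar> \<le> (1 + \<bar>real_of_int (t - s)\<bar>) * (1 + \<bar>real_of_int s\<bar>)"
proof -
  have "\<bar>real_of_int t\<bar> \<le> \<bar>real_of_int (t - s)\<bar> + \<bar>real_of_int s\<bar>" by linarith
  moreover have "0 \<le> \<bar>real_of_int (t - s)\<bar> * \<bar>real_of_int s\<bar>" by simp
  moreover have "(1 + \<bar>real_of_int (t - s)\<bar>) * (1 + \<bar>real_of_int s\<bar>) = 1 + \<bar>real_of_int (t - s)\<bar> + \<bar>real_of_int s\<bar> + \<bar>real_of_int (t - s)\<bar> * \<bar>real_of_int s\<bar>"
    by (simp add: algebra_simps del: of_int_diff)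
  ultimately show ?thesis by linarith
qed

lemma peetre: "(1 + \<bar>real_of_int t\<bar>) ^ M \<le> (1 + \<bar>real_of_int (t - s)\<bar>) ^ M * (1 + \<bar>real_of_int s\<bar>) ^ M"
  using power_mono[OF peetre1[of t s], of M] by (simp add: power_mult_distrib)

lemma l1_real_iff: "l1 (f :: int \<Rightarrow> real) \<longleftrightarrow> f summable_on UNIV" if "\<And>k. f k \<ge> 0"
  using that unfolding l1_def by simp

lemma nrm_real: "nrm (f :: int \<Rightarrow> real) = infsum f UNIV" if "\<And>k. f k \<ge> 0"
  using that unfolding nrm_def by simp

lemma weighted_bound:
  fixes E d :: "int \<Rightarrow> complex"
  assumes lE: "l1 E" and rd: "rapid d" and eig: "\<And>t. of_int t * E t = - q * conv d E t"
    and MR: "M \<le> R"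
  defines "A \<equiv> infsum (\<lambda>k. (1 + \<bar>real_of_int k\<bar>) ^ R * norm (d k)) UNIV"
  shows "(\<lambda>t. (1 + \<bar>real_of_int t\<bar>) ^ M * norm (E t)) summable_on UNIV \<and>
         infsum (\<lambda>t. (1 + \<bar>real_of_int t\<bar>) ^ M * norm (E t)) UNIV \<le> (1 + norm q * A) ^ M * nrm E"
  using MR
proof (induction M)
  case 0
  then show ?case using lE unfolding l1_def nrm_def by simp
next
  case (Suc M)
  then have IH: "(\<lambda>t. (1 + \<bar>real_of_int t\<bar>) ^ M * norm (E t)) summable_on UNIV"
    "infsum (\<lambda>t. (1 + \<bar>real_of_int t\<bar>) ^ M * norm (E t)) UNIV \<le> (1 + norm q * A) ^ M * nrm E"
    by auto
  define w where "w k = (1 + \<bar>real_of_int k\<bar>) ^ M" for k :: int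
  define dw where "dw k = w k * norm (d k)" for k
  define Ew where "Ew k = w k * norm (E k)" for k
  have w1: "w k \<ge> 1" for k unfolding w_def by simp
  have dw0: "dw k \<ge> 0" and Ew0: "Ew k \<ge> 0" for k unfolding dw_def Ew_def w_def by auto
  have ld: "l1 d" using rapid_wsum[OF rd, of 0] unfolding l1_def by simp
  have ldw: "l1 dw" using rapid_wsum[OF rd, of M] dw0 unfolding dw_def w_def by (simp add: l1_real_iff)
  have lEw: "l1 Ew" using IH(1) Ew0 unfolding Ew_def w_def by (simp add: l1_real_iff)
  have sR: "(\<lambda>k. (1 + \<bar>real_of_int k\<bar>) ^ R * norm (d k)) summable_on UNIV" by (rule rapid_wsum[OF rd])
  have ndw: "nrm dw \<le> A"
    unfolding nrm_real[OF dw0] A_def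
  proof (rule infsum_mono)
    show "dw summable_on UNIV" using ldw dw0 by (simp add: l1_real_iff)
    show "dw k \<le> (1 + \<bar>real_of_int k\<bar>) ^ R * norm (d k)" for k
      unfolding dw_def w_def using Suc.prems by (intro mult_right_mono power_increasing) auto
  qed (rule sR)
  have nEw: "nrm Ew \<le> (1 + norm q * A) ^ M * nrm E"
    using IH(2) unfolding nrm_real[OF Ew0] Ew_def w_def .
  have A0: "A \<ge> 0" unfolding A_def by (rule infsum_nonneg) simp
  have pt: "(1 + \<bar>real_of_int t\<bar>) ^ Suc M * norm (E t) \<le> Ew t + norm q * conv dw Ew t" for t
  proof -
    have "w t * norm (conv d E t) \<le> w t * infsum (\<lambda>s. norm (d (t - s) * E s)) UNIV"
      unfolding conv_def by (intro mult_left_mono norm_infsum_bound) (use conv_summable(1)[OF ld lE] w1 in \<open>auto intro: order_trans[OF zero_le_one]\<close>)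
    also have "\<dots> = infsum (\<lambda>s. w t * (norm (d (t - s)) * norm (E s))) UNIV"
      by (simp add: infsum_cmult_right' norm_mult)
    also have "\<dots> \<le> infsum (\<lambda>s. dw (t - s) * Ew s) UNIV"
    proof (rule infsum_mono)
      show "(\<lambda>s. w t * (norm (d (t - s)) * norm (E s))) summable_on UNIV"
        using summable_on_cmult_right[OF conv_summable(1)[OF ld lE, of t]] by (simp add: norm_mult)
      show "(\<lambda>s. dw (t - s) * Ew s) summable_on UNIV"
        using conv_summable(2)[OF ldw lEw, of t] .
      show "w t * (norm (d (t - s)) * norm (E s)) \<le> dw (t - s) * Ew s" for s
      proof -
        have "w t \<le> w (t - s) * w s" unfolding w_def by (rule peetre)
        then have "w t * (norm (d (t - s)) * norm (E s)) \<le> (w (t - s) * w s) * (norm (d (t - s)) * norm (E s))"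
          by (intro mult_right_mono) auto
        then show ?thesis unfolding dw_def Ew_def by (simp add: mult_ac)
      qed
    qed
    also have "\<dots> = conv dw Ew t" by (simp add: conv_def)
    finally have c: "w t * norm (conv d E t) \<le> conv dw Ew t" .
    have "(1 + \<bar>real_of_int t\<bar>) ^ Suc M * norm (E t) = w t * norm (E t) + w t * norm (of_int t * E t)"
      unfolding w_def by (simp add: norm_mult algebra_simps)
    also have "w t * norm (of_int t * E t) = norm q * (w t * norm (conv d E t))"
      using eig[of t] by (simp add: norm_mult norm_minus_cancel)
    also have "\<dots> \<le> norm q * conv dw Ew t" by (intro mult_left_mono c) auto
    finally show ?thesis unfolding Ew_def by simp
  qed
  have sconv: "conv dw Ew summable_on UNIV"
  proof -
    have "l1 (conv dw Ew)" by (rule l1_conv(1)[OF ldw lEw])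
    moreover have "conv dw Ew k \<ge> 0" for k
      unfolding conv_def by (rule infsum_nonneg) (use dw0 Ew0 in auto)
    ultimately show ?thesis by (simp add: l1_real_iff)
  qed
  have sEw: "Ew summable_on UNIV" using lEw Ew0 by (simp add: l1_real_iff)
  have sRHS: "(\<lambda>t. Ew t + norm q * conv dw Ew t) summable_on UNIV"
    by (intro summable_on_add sEw summable_on_cmult_right sconv)
  have S: "(\<lambda>t. (1 + \<bar>real_of_int t\<bar>) ^ Suc M * norm (E t)) summable_on UNIV"
    by (rule summable_on_comparison_test[OF sRHS]) (use pt in auto)
  have "infsum (\<lambda>t. (1 + \<bar>real_of_int t\<bar>) ^ Suc M * norm (E t)) UNIV \<le> infsum (\<lambda>t. Ew t + norm q * conv dw Ew t) UNIV"
    by (rule infsum_mono[OF S sRHS]) (rule pt)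
  also have "\<dots> = infsum Ew UNIV + norm q * infsum (conv dw Ew) UNIV"
    by (simp add: infsum_add[OF sEw summable_on_cmult_right[OF sconv]] infsum_cmult_right')
  also have "infsum (conv dw Ew) UNIV = infsum dw UNIV * infsum Ew UNIV"
    by (rule infsum_conv[OF ldw lEw])
  also have "infsum Ew UNIV + norm q * (infsum dw UNIV * infsum Ew UNIV) = (1 + norm q * nrm dw) * nrm Ew"
    by (simp add: nrm_real[OF dw0] nrm_real[OF Ew0] algebra_simps)
  also have "\<dots> \<le> (1 + norm q * A) * ((1 + norm q * A) ^ M * nrm E)"
    by (intro mult_mono add_left_mono mult_left_mono ndw nEw) (use A0 nrm_nonneg in auto)
  finally show ?case using S by simp
qed

lemma weighted_pointwise:
  fixes E d :: "int \<Rightarrow> complex"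
  assumes lE: "l1 E" and rd: "rapid d" and eig: "\<And>t. of_int t * E t = - q * conv d E t"
  shows "(1 + \<bar>real_of_int t\<bar>) ^ R * norm (E t) \<le>
     (1 + norm q * infsum (\<lambda>k. (1 + \<bar>real_of_int k\<bar>) ^ R * norm (d k)) UNIV) ^ R * nrm E"
proof -
  let ?f = "\<lambda>t. (1 + \<bar>real_of_int t\<bar>) ^ R * norm (E t)"
  have W: "?f summable_on UNIV \<and> infsum ?f UNIV \<le> (1 + norm q * infsum (\<lambda>k. (1 + \<bar>real_of_int k\<bar>) ^ R * norm (d k)) UNIV) ^ R * nrm E"
    by (rule weighted_bound[OF lE rd eig]) simp
  have "infsum ?f {t} \<le> infsum ?f UNIV"
    by (rule infsum_mono_neutral) (use W in auto)
  then show ?thesis using W by simp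
qed

lemma inorm_nonneg: "inorm \<xi> \<ge> 0"
  unfolding inorm_def by (intro real_sqrt_ge_zero sum_nonneg) auto

lemma knorm_ge: "\<bar>real_of_int (fst k)\<bar> \<le> knorm k" "inorm (snd k) \<le> knorm k"
proof -
  show "\<bar>real_of_int (fst k)\<bar> \<le> knorm k" unfolding knorm_def
    by (rule real_le_rsqrt) simp
  show "inorm (snd k) \<le> knorm k" unfolding knorm_def
    by (rule real_le_rsqrt) simp
qed

lemma knorm_le: "knorm k \<le> \<bar>real_of_int (fst k)\<bar> + inorm (snd k)"
  unfolding knorm_def
proof (rule real_le_lsqrt)
  show "0 \<le> \<bar>real_of_int (fst k)\<bar> + inorm (snd k)" using inorm_nonneg[of "snd k"] by simp
  have "0 \<le> \<bar>real_of_int (fst k)\<bar> * inorm (snd k)" using inorm_nonneg[of "snd k"] by simp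
  then show "(real_of_int (fst k))\<^sup>2 + (inorm (snd k))\<^sup>2 \<le> (\<bar>real_of_int (fst k)\<bar> + inorm (snd k))\<^sup>2"
    by (simp add: power2_eq_square algebra_simps)
qed

lemma inorm_ge1:
  fixes \<xi> :: "int ^ ('n::finite)"
  assumes "\<xi> \<noteq> 0" shows "inorm \<xi> \<ge> 1"
proof -
  obtain i where i: "\<xi> $ i \<noteq> 0" using assms by (metis vec_eq_iff zero_index)
  then have "1 \<le> \<bar>\<xi> $ i\<bar>" by arith
  then have "1 \<le> \<bar>real_of_int (\<xi> $ i)\<bar>" by (metis of_int_1_le_iff of_int_abs)
  then have "1 \<le> \<bar>real_of_int (\<xi> $ i)\<bar> ^ 2" using power_mono[of 1 "\<bar>real_of_int (\<xi> $ i)\<bar>" 2] by simp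
  then have "(real_of_int (\<xi> $ i))^2 \<ge> 1" by simp
  also have "\<dots> \<le> (\<Sum>j\<in>UNIV. (real_of_int (\<xi> $ j))^2)"
    by (rule member_le_sum) auto
  finally show ?thesis unfolding inorm_def by simp
qed

definition X :: "int \<times> (int ^ ('n::finite)) \<Rightarrow> real" where
  "X k = (1 + \<bar>real_of_int (fst k)\<bar>) * (1 + inorm (snd k))"

lemma X_ge1: "X k \<ge> 1"
  unfolding X_def using inorm_nonneg[of "snd k"]
    mult_mono[of 1 "1 + \<bar>real_of_int (fst k)\<bar>" 1 "1 + inorm (snd k)"] by simp

lemma X_pos: "X k > 0" using X_ge1[of k] by linarith

lemma X_pow_pos [simp]: "X k ^ n > 0" and X_pow_nonneg [simp]: "X k ^ n \<ge> 0"
  using X_pos[of k] by auto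

lemma X_pow_not_le [simp]: "\<not> (X k ^ n \<le> 0)"
  using X_pow_pos[of k n] by linarith

lemma X_knorm: "1 + knorm k \<le> X k" "X k \<le> (1 + knorm k) ^ 2"
proof -
  have i: "inorm (snd k) \<ge> 0" by (rule inorm_nonneg)
  have "X k = 1 + \<bar>real_of_int (fst k)\<bar> + inorm (snd k) + \<bar>real_of_int (fst k)\<bar> * inorm (snd k)"
    unfolding X_def by (simp add: algebra_simps)
  then show "1 + knorm k \<le> X k"
    using knorm_le[of k] i mult_nonneg_nonneg[of "\<bar>real_of_int (fst k)\<bar>" "inorm (snd k)"] by linarith
  show "X k \<le> (1 + knorm k) ^ 2"
    unfolding X_def power2_eq_square using knorm_ge[of k] i by (intro mult_mono) auto
qed

lemma distr_iff:
  "distr_coeffs u \<longleftrightarrow> (\<exists>C N. \<forall>k. norm (u k) \<le> C * X k ^ N)"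
proof
  assume "distr_coeffs u"
  then obtain C N where CN: "\<forall>k. norm (u k) \<le> C * (1 + knorm k) ^ N" unfolding distr_coeffs_def by blast
  have "norm (u k) \<le> max C 0 * X k ^ N" for k
  proof -
    have kn: "0 \<le> knorm k" using knorm_ge(2)[of k] inorm_nonneg[of "snd k"] by linarith
    have "norm (u k) \<le> C * (1 + knorm k) ^ N" using CN by blast
    also have "\<dots> \<le> max C 0 * (1 + knorm k) ^ N" using kn by (intro mult_right_mono) auto
    also have "\<dots> \<le> max C 0 * X k ^ N" using kn X_knorm(1)[of k] by (intro mult_left_mono power_mono) auto
    finally show ?thesis .
  qed
  then show "\<exists>C N. \<forall>k. norm (u k) \<le> C * X k ^ N" by blast
next
  assume "\<exists>C N. \<forall>k. norm (u k) \<le> C * X k ^ N"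
  then obtain C N where CN: "\<forall>k. norm (u k) \<le> C * X k ^ N" by blast
  have "norm (u k) \<le> max C 0 * (1 + knorm k) ^ (2 * N)" for k
  proof -
    have "norm (u k) \<le> C * X k ^ N" using CN by blast
    also have "\<dots> \<le> max C 0 * X k ^ N" using X_ge1[of k] by (intro mult_right_mono) auto
    also have "\<dots> \<le> max C 0 * ((1 + knorm k) ^ 2) ^ N"
      using X_ge1[of k] X_knorm(2)[of k] by (intro mult_left_mono power_mono) auto
    finally show ?thesis by (simp add: power_mult)
  qed
  then show "distr_coeffs u" unfolding distr_coeffs_def by blast
qed

lemma smooth_iff:
  "smooth_coeffs u \<longleftrightarrow> (\<forall>N. \<exists>C. \<forall>k. norm (u k) * X k ^ N \<le> C)"
proof
  assume sm: "smooth_coeffs u"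
  show "\<forall>N. \<exists>C. \<forall>k. norm (u k) * X k ^ N \<le> C"
  proof
    fix N
    obtain C where C: "\<forall>k. norm (u k) \<le> C / (1 + knorm k) ^ (2 * N)" using sm unfolding smooth_coeffs_def by blast
    have "norm (u k) * X k ^ N \<le> C" for k
    proof -
      have kn: "0 \<le> knorm k" using knorm_ge(2)[of k] inorm_nonneg[of "snd k"] by linarith
      have p: "(1 + knorm k) ^ (2 * N) > 0" using kn by simp
      from C have "norm (u k) \<le> C / (1 + knorm k) ^ (2 * N)" by blast
      then have "norm (u k) * (1 + knorm k) ^ (2 * N) \<le> C" using p by (simp add: pos_le_divide_eq)
      moreover have "X k ^ N \<le> (1 + knorm k) ^ (2 * N)"
        using X_knorm(2)[of k] X_ge1[of k] power_mono[of "X k" "(1 + knorm k)^2" N] by (simp add: power_mult)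
      ultimately show ?thesis by (meson mult_left_mono norm_ge_zero order_trans)
    qed
    then show "\<exists>C. \<forall>k. norm (u k) * X k ^ N \<le> C" by blast
  qed
next
  assume sm: "\<forall>N. \<exists>C. \<forall>k. norm (u k) * X k ^ N \<le> C"
  show "smooth_coeffs u" unfolding smooth_coeffs_def
  proof
    fix N :: nat
    obtain C where C: "\<forall>k. norm (u k) * X k ^ N \<le> C" using sm by blast
    have "norm (u k) \<le> C / (1 + knorm k) ^ N" for k
    proof -
      have kn: "0 \<le> knorm k" using knorm_ge(2)[of k] inorm_nonneg[of "snd k"] by linarith
      have p: "(1 + knorm k) ^ N > 0" using kn by simp
      have "norm (u k) * (1 + knorm k) ^ N \<le> norm (u k) * X k ^ N"
        using X_knorm(1)[of k] kn by (intro mult_left_mono power_mono) auto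
      moreover from C have "norm (u k) * X k ^ N \<le> C" by blast
      ultimately have "norm (u k) * (1 + knorm k) ^ N \<le> C" by linarith
      then show ?thesis using p by (simp add: pos_le_divide_eq)
    qed
    then show "\<exists>C. \<forall>k. norm (u k) \<le> C / (1 + knorm k) ^ N" by blast
  qed
qed

lemma symb_poly:
  fixes p :: "int ^ ('n::finite) \<Rightarrow> complex"
  assumes "\<exists>C>0. \<forall>\<xi>. \<xi> \<noteq> 0 \<longrightarrow> norm (p \<xi>) \<le> C * inorm \<xi> powr \<nu>"
  shows "\<exists>Cp K. Cp \<ge> 0 \<and> (\<forall>\<xi>. norm (p \<xi>) \<le> Cp * (1 + inorm \<xi>) ^ K)"
proof -
  obtain C where C: "C > 0" "\<forall>\<xi>. \<xi> \<noteq> 0 \<longrightarrow> norm (p \<xi>) \<le> C * inorm \<xi> powr \<nu>" using assms by blast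
  define K where "K = nat \<lceil>\<nu>\<rceil>"
  have "norm (p \<xi>) \<le> (C + norm (p 0)) * (1 + inorm \<xi>) ^ K" for \<xi>
  proof (cases "\<xi> = 0")
    case True
    have "norm (p 0) \<le> (C + norm (p 0)) * 1" using C by simp
    also have "\<dots> \<le> (C + norm (p 0)) * (1 + inorm \<xi>) ^ K"
      using C inorm_nonneg[of \<xi>] by (intro mult_left_mono one_le_power) auto
    finally show ?thesis using True by simp
  next
    case False
    have i1: "inorm \<xi> \<ge> 1" by (rule inorm_ge1[OF False])
    have "inorm \<xi> powr \<nu> \<le> inorm \<xi> powr (real K)"
      using i1 unfolding K_def by (intro powr_mono) (auto, linarith)
    also have "\<dots> = inorm \<xi> ^ K" using i1 by (simp add: powr_realpow)
    also have "\<dots> \<le> (1 + inorm \<xi>) ^ K" using i1 by (intro power_mono) auto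
    finally have "norm (p \<xi>) \<le> C * (1 + inorm \<xi>) ^ K"
      using C False by (meson less_eq_real_def mult_left_mono order_trans)
    also have "\<dots> \<le> (C + norm (p 0)) * (1 + inorm \<xi>) ^ K"
      using inorm_nonneg[of \<xi>] by (intro mult_right_mono) auto
    finally show ?thesis .
  qed
  moreover have "C + norm (p 0) \<ge> 0" using C by simp
  ultimately show ?thesis by blast
qed

section \<open>Mapping properties of the operators\<close>

lemma conv_moderate:
  fixes a b :: "int \<Rightarrow> complex"
  assumes ra: "rapid a" and bb: "\<And>s. norm (b s) \<le> B * g s"
    and gm: "\<And>s. g s \<le> (1 + \<bar>real_of_int (t - s)\<bar>) ^ N * g t"
    and g0: "\<And>s. g s \<ge> 0" and B0: "B \<ge> 0"
  shows "norm (infsum (\<lambda>s. a (t - s) * b s) UNIV) \<le> B * infsum (\<lambda>k. (1 + \<bar>real_of_int k\<bar>) ^ N * norm (a k)) UNIV * g t"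
proof -
  define wa where "wa k = (1 + \<bar>real_of_int k\<bar>) ^ N * norm (a k)" for k
  have swa: "wa summable_on UNIV" unfolding wa_def by (rule rapid_wsum[OF ra])
  have swa': "(\<lambda>s. B * g t * wa (t - s)) summable_on UNIV"
    by (rule summable_on_cmult_right) (use swa summable_reflect[of wa t] in simp)
  have le: "norm (a (t - s) * b s) \<le> B * g t * wa (t - s)" for s
  proof -
    have "norm (a (t - s) * b s) \<le> norm (a (t - s)) * (B * ((1 + \<bar>real_of_int (t - s)\<bar>) ^ N * g t))"
      unfolding norm_mult
    proof (rule mult_left_mono)
      show "norm (b s) \<le> B * ((1 + \<bar>real_of_int (t - s)\<bar>) ^ N * g t)"
        using bb[of s] mult_left_mono[OF gm[of s] B0] by linarith
    qed simp
    then show ?thesis unfolding wa_def by (simp add: mult_ac)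
  qed
  have sn: "(\<lambda>s. norm (a (t - s) * b s)) summable_on UNIV"
    by (rule summable_on_comparison_test[OF swa']) (use le in auto)
  have "norm (infsum (\<lambda>s. a (t - s) * b s) UNIV) \<le> infsum (\<lambda>s. norm (a (t - s) * b s)) UNIV"
    by (rule norm_infsum_bound) (use sn in simp)
  also have "\<dots> \<le> infsum (\<lambda>s. B * g t * wa (t - s)) UNIV"
    by (rule infsum_mono[OF sn swa']) (rule le)
  also have "\<dots> = B * g t * infsum wa UNIV"
    by (simp add: infsum_cmult_right' infsum_reflect[of wa t])
  finally show ?thesis unfolding wa_def by (simp add: mult_ac)
qed

lemma X_shift: "X (s, \<xi>) \<le> (1 + \<bar>real_of_int (t - s)\<bar>) * X (t, \<xi>)"
proof -
  have "1 + \<bar>real_of_int s\<bar> \<le> (1 + \<bar>real_of_int (s - t)\<bar>) * (1 + \<bar>real_of_int t\<bar>)" by (rule peetre1)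
  also have "\<bar>real_of_int (s - t)\<bar> = \<bar>real_of_int (t - s)\<bar>" by simp
  finally have "(1 + \<bar>real_of_int s\<bar>) * (1 + inorm \<xi>) \<le> ((1 + \<bar>real_of_int (t - s)\<bar>) * (1 + \<bar>real_of_int t\<bar>)) * (1 + inorm \<xi>)"
    using inorm_nonneg[of \<xi>] by (intro mult_right_mono) auto
  then show ?thesis unfolding X_def by (simp add: mult_ac)
qed

lemma tau_le_X: "\<bar>real_of_int (fst k)\<bar> \<le> X k" and inorm_le_X: "1 + inorm (snd k) \<le> X k"
proof -
  have i: "inorm (snd k) \<ge> 0" by (rule inorm_nonneg)
  have "X k = 1 + \<bar>real_of_int (fst k)\<bar> + inorm (snd k) + \<bar>real_of_int (fst k)\<bar> * inorm (snd k)"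
    unfolding X_def by (simp add: algebra_simps)
  then show "\<bar>real_of_int (fst k)\<bar> \<le> X k" "1 + inorm (snd k) \<le> X k"
    using i mult_nonneg_nonneg[of "\<bar>real_of_int (fst k)\<bar>" "inorm (snd k)"] by linarith+
qed

lemma X_pow_mono: "a \<le> b \<Longrightarrow> X k ^ a \<le> X k ^ b"
  using X_ge1[of k] by (rule power_increasing[rotated])

lemma Lop_distr:
  fixes p :: "int ^ ('n::finite) \<Rightarrow> complex"
  assumes sp: "smooth_periodic c" and pb: "\<And>\<xi>. norm (p \<xi>) \<le> Cp * (1 + inorm \<xi>) ^ K" and Cp: "Cp \<ge> 0"
    and u: "distr_coeffs u"
  shows "distr_coeffs (Lop c p u)"
proof -
  obtain C N where CN: "\<And>k. norm (u k) \<le> C * X k ^ N" using u unfolding distr_iff by blast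
  have C0: "C \<ge> 0"
  proof -
    have "norm (u (0, 0::int^'n)) \<le> C * X (0, 0::int^'n) ^ N" by (rule CN)
    then have "0 \<le> C * X (0, 0::int^'n) ^ N" by (rule order_trans[OF norm_ge_zero])
    moreover have "X (0, 0::int^'n) ^ N > 0" using X_ge1[of "(0, 0::int^'n)"] by simp
    ultimately show ?thesis by (simp add: zero_le_mult_iff)
  qed
  define A where "A = infsum (\<lambda>k. (1 + \<bar>real_of_int k\<bar>) ^ N * norm (fcoef c k)) UNIV"
  have A0: "A \<ge> 0" unfolding A_def by (rule infsum_nonneg) simp
  have "norm (Lop c p u k) \<le> (C + Cp * C * A) * X k ^ (N + K + 1)" for k
  proof -
    obtain t \<xi> where k: "k = (t, \<xi>)" by (cases k)
    have cv: "norm (infsum (\<lambda>s. fcoef c (t - s) * u (s, \<xi>)) UNIV) \<le> C * A * X (t, \<xi>) ^ N"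
      unfolding A_def
    proof (rule conv_moderate[OF fcoef_rapid[OF sp], where g = "\<lambda>s. X (s, \<xi>) ^ N"])
      show "norm (u (s, \<xi>)) \<le> C * X (s, \<xi>) ^ N" for s by (rule CN)
      show "X (s, \<xi>) ^ N \<le> (1 + \<bar>real_of_int (t - s)\<bar>) ^ N * X (t, \<xi>) ^ N" for s
        using power_mono[OF X_shift[of s \<xi> t], of N] X_ge1[of "(s, \<xi>)"] by (simp add: power_mult_distrib)
      show "0 \<le> X (s, \<xi>) ^ N" for s using X_ge1[of "(s, \<xi>)"] by simp
    qed (rule C0)
    have Xk: "X k \<ge> 1" by (rule X_ge1)
    have t1: "norm (of_int t * u (t, \<xi>)) \<le> C * X k ^ (N + K + 1)"
    proof -
      have "norm (of_int t * u (t, \<xi>)) = \<bar>real_of_int t\<bar> * norm (u k)" using k by (simp add: norm_mult)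
      also have "\<dots> \<le> X k * (C * X k ^ N)"
        using tau_le_X[of k] CN[of k] k by (intro mult_mono) auto
      also have "\<dots> = C * X k ^ (N + 1)" by (simp add: mult_ac)
      also have "\<dots> \<le> C * X k ^ (N + K + 1)" by (intro mult_left_mono X_pow_mono C0) auto
      finally show ?thesis .
    qed
    have t2: "norm (p \<xi> * infsum (\<lambda>s. fcoef c (t - s) * u (s, \<xi>)) UNIV) \<le> Cp * C * A * X k ^ (N + K + 1)"
    proof -
      have "norm (p \<xi>) \<le> Cp * X k ^ K"
      proof -
        have "(1 + inorm \<xi>) ^ K \<le> X k ^ K"
          using inorm_le_X[of k] k inorm_nonneg[of \<xi>] by (intro power_mono) auto
        then have "Cp * (1 + inorm \<xi>) ^ K \<le> Cp * X k ^ K" by (rule mult_left_mono[OF _ Cp])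
        then show ?thesis using pb[of \<xi>] by linarith
      qed
      then have "norm (p \<xi> * infsum (\<lambda>s. fcoef c (t - s) * u (s, \<xi>)) UNIV) \<le> (Cp * X k ^ K) * (C * A * X k ^ N)"
        unfolding norm_mult using cv k by (intro mult_mono) (auto intro!: mult_nonneg_nonneg Cp)
      also have "\<dots> = Cp * C * A * X k ^ (N + K)" by (simp add: power_add mult_ac)
      also have "\<dots> \<le> Cp * C * A * X k ^ (N + K + 1)"
        by (intro mult_left_mono X_pow_mono) (auto intro!: mult_nonneg_nonneg Cp C0 A0)
      finally show ?thesis .
    qed
    have "norm (Lop c p u k) \<le> norm (of_int t * u (t, \<xi>)) + norm (p \<xi> * infsum (\<lambda>s. fcoef c (t - s) * u (s, \<xi>)) UNIV)"
      unfolding k Lop_def by (simp add: norm_triangle_ineq)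
    also have "\<dots> \<le> (C + Cp * C * A) * X k ^ (N + K + 1)" using t1 t2 by (simp add: algebra_simps)
    finally show ?thesis .
  qed
  then show ?thesis unfolding distr_iff by blast
qed

lemma Lop_smooth:
  fixes p :: "int ^ ('n::finite) \<Rightarrow> complex"
  assumes sp: "smooth_periodic c" and pb: "\<And>\<xi>. norm (p \<xi>) \<le> Cp * (1 + inorm \<xi>) ^ K" and Cp: "Cp \<ge> 0"
    and u: "smooth_coeffs u"
  shows "smooth_coeffs (Lop c p u)"
  unfolding smooth_iff
proof
  fix N
  define N' where "N' = N + K + 1"
  obtain C where CN: "\<And>k. norm (u k) * X k ^ N' \<le> C" using u unfolding smooth_iff by blast
  have C0: "C \<ge> 0"
  proof -
    have "norm (u (0, 0::int^'n)) * X (0, 0::int^'n) ^ N' \<le> C" by (rule CN)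
    moreover have "0 \<le> norm (u (0, 0::int^'n)) * X (0, 0::int^'n) ^ N'" using X_ge1[of "(0, 0::int^'n)"] by simp
    ultimately show ?thesis by linarith
  qed
  have ub: "norm (u k) \<le> C * inverse (X k ^ N')" for k
  proof -
    have "X k ^ N' > 0" using X_ge1[of k] by simp
    then show ?thesis using CN[of k] by (simp add: field_simps)
  qed
  define A where "A = infsum (\<lambda>k. (1 + \<bar>real_of_int k\<bar>) ^ N' * norm (fcoef c k)) UNIV"
  have A0: "A \<ge> 0" unfolding A_def by (rule infsum_nonneg) simp
  have "norm (Lop c p u k) * X k ^ N \<le> C + Cp * C * A" for k
  proof -
    obtain t \<xi> where k: "k = (t, \<xi>)" by (cases k)
    have Xk: "X k \<ge> 1" by (rule X_ge1)
    have cv: "norm (infsum (\<lambda>s. fcoef c (t - s) * u (s, \<xi>)) UNIV) \<le> C * A * inverse (X (t, \<xi>) ^ N')"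
      unfolding A_def
    proof (rule conv_moderate[OF fcoef_rapid[OF sp], where g = "\<lambda>s. inverse (X (s, \<xi>) ^ N')"])
      show "norm (u (s, \<xi>)) \<le> C * inverse (X (s, \<xi>) ^ N')" for s by (rule ub)
      show "inverse (X (s, \<xi>) ^ N') \<le> (1 + \<bar>real_of_int (t - s)\<bar>) ^ N' * inverse (X (t, \<xi>) ^ N')" for s
      proof -
        have "X (t, \<xi>) \<le> (1 + \<bar>real_of_int (s - t)\<bar>) * X (s, \<xi>)" by (rule X_shift)
        then have "X (t, \<xi>) ^ N' \<le> ((1 + \<bar>real_of_int (t - s)\<bar>) * X (s, \<xi>)) ^ N'"
          using X_ge1[of "(t, \<xi>)"] by (intro power_mono) (auto simp: abs_minus_commute)
        then have "X (t, \<xi>) ^ N' \<le> (1 + \<bar>real_of_int (t - s)\<bar>) ^ N' * X (s, \<xi>) ^ N'"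
          by (simp add: power_mult_distrib)
        moreover have "X (s, \<xi>) ^ N' > 0" "X (t, \<xi>) ^ N' > 0" by simp_all
        ultimately show ?thesis by (simp add: field_simps)
      qed
      show "0 \<le> inverse (X (s, \<xi>) ^ N')" for s using X_ge1[of "(s, \<xi>)"] by simp
    qed (rule C0)
    have XN: "X k ^ N > 0" using Xk by simp
    have t1: "norm (of_int t * u (t, \<xi>)) * X k ^ N \<le> C"
    proof -
      have "norm (of_int t * u (t, \<xi>)) * X k ^ N = \<bar>real_of_int t\<bar> * norm (u k) * X k ^ N" using k by (simp add: norm_mult)
      also have "\<dots> \<le> X k * norm (u k) * X k ^ N"
        using tau_le_X[of k] k XN by (intro mult_right_mono) auto
      also have "\<dots> = norm (u k) * X k ^ (N + 1)" by (simp add: mult_ac)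
      also have "\<dots> \<le> norm (u k) * X k ^ N'" unfolding N'_def by (intro mult_left_mono X_pow_mono) auto
      also have "\<dots> \<le> C" by (rule CN)
      finally show ?thesis .
    qed
    have t2: "norm (p \<xi> * infsum (\<lambda>s. fcoef c (t - s) * u (s, \<xi>)) UNIV) * X k ^ N \<le> Cp * C * A"
    proof -
      have pX: "norm (p \<xi>) \<le> Cp * X k ^ K"
      proof -
        have "(1 + inorm \<xi>) ^ K \<le> X k ^ K"
          using inorm_le_X[of k] k inorm_nonneg[of \<xi>] by (intro power_mono) auto
        then have "Cp * (1 + inorm \<xi>) ^ K \<le> Cp * X k ^ K" by (rule mult_left_mono[OF _ Cp])
        then show ?thesis using pb[of \<xi>] by linarith
      qed
      have "norm (p \<xi> * infsum (\<lambda>s. fcoef c (t - s) * u (s, \<xi>)) UNIV) * X k ^ N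
          \<le> (Cp * X k ^ K) * (C * A * inverse (X k ^ N')) * X k ^ N"
        unfolding norm_mult using cv k pX XN by (intro mult_mono mult_right_mono) (auto intro!: mult_nonneg_nonneg Cp)
      also have "\<dots> = Cp * C * A * (X k ^ (K + N) * inverse (X k ^ N'))" by (simp add: power_add mult_ac)
      also have "X k ^ (K + N) * inverse (X k ^ N') \<le> 1"
      proof -
        have "X k ^ (K + N) \<le> X k ^ N'" unfolding N'_def by (intro X_pow_mono) auto
        moreover have "X k ^ N' > 0" using Xk by simp
        ultimately show ?thesis by (simp add: field_simps)
      qed
      then have "Cp * C * A * (X k ^ (K + N) * inverse (X k ^ N')) \<le> Cp * C * A * 1"
        by (intro mult_left_mono) (auto intro!: mult_nonneg_nonneg Cp C0 A0)
      finally show ?thesis by simp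
    qed
    have "norm (Lop c p u k) \<le> norm (of_int t * u (t, \<xi>)) + norm (p \<xi> * infsum (\<lambda>s. fcoef c (t - s) * u (s, \<xi>)) UNIV)"
      unfolding k Lop_def by (simp add: norm_triangle_ineq)
    then have "norm (Lop c p u k) * X k ^ N \<le> (norm (of_int t * u (t, \<xi>)) + norm (p \<xi> * infsum (\<lambda>s. fcoef c (t - s) * u (s, \<xi>)) UNIV)) * X k ^ N"
      using XN by (intro mult_right_mono) auto
    also have "\<dots> \<le> C + Cp * C * A" using t1 t2 by (simp add: algebra_simps)
    finally show ?thesis .
  qed
  then show "\<exists>C. \<forall>k. norm (Lop c p u k) * X k ^ N \<le> C" by blast
qed

lemma smooth_periodic_const: "smooth_periodic (\<lambda>_. a)"
  unfolding smooth_periodic_def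
proof (intro conjI exI[of _ "\<lambda>n. if n = 0 then (\<lambda>_. a) else (\<lambda>_. 0)"] allI)
  show "(\<lambda>n. if n = 0 then (\<lambda>_. a) else (\<lambda>_. 0)) 0 = (\<lambda>_. a)" by simp
  fix k t
  show "((if k = 0 then (\<lambda>_. a) else (\<lambda>_. 0)) has_vector_derivative (if Suc k = 0 then (\<lambda>_. a) else (\<lambda>_. 0)) t) (at t)"
    by (auto intro: has_vector_derivative_const)
qed simp

lemma fcoef_const: "fcoef (\<lambda>_. a) k = (if k = 0 then a else 0)"
proof (cases "k = 0")
  case True
  have "integral {0..2*pi} (\<lambda>t::real. a) = (2*pi) *\<^sub>R a" by (simp add: integral_const_real)
  then show ?thesis using True unfolding fcoef_def by (simp add: scaleR_conv_of_real)
next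
  case False
  have "fcoef (\<lambda>_. 0) k = \<i> * of_int k * fcoef (\<lambda>_. a) k"
    by (rule fcoef_deriv) (auto intro: has_vector_derivative_const)
  moreover have "fcoef (\<lambda>_. 0) k = 0" unfolding fcoef_def by simp
  ultimately show ?thesis using False by simp
qed

lemma Lop_const: "Lop (\<lambda>_. a) p u (t, \<xi>) = (of_int t + p \<xi> * a) * u (t, \<xi>)"
proof -
  have "infsum (\<lambda>s. fcoef (\<lambda>_. a) (t - s) * u (s, \<xi>)) UNIV = a * u (t, \<xi>)"
    by (subst infsum_single_point[where t = t]) (auto simp: fcoef_const)
  then show ?thesis unfolding Lop_def by (simp add: algebra_simps)
qed

definition Zc :: real where "Zc = infsum (\<lambda>k::int. 1 / (1 + \<bar>real_of_int k\<bar>) ^ 2) UNIV"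

lemma Zc_pos: "Zc > 0"
proof -
  have "infsum (\<lambda>k::int. 1 / (1 + \<bar>real_of_int k\<bar>) ^ 2) {0} \<le> Zc"
    unfolding Zc_def by (rule infsum_mono_neutral) (use summable_int_inv_sq in auto)
  then show ?thesis by simp
qed

lemma tau1_exists:
  fixes E :: "int \<Rightarrow> complex"
  assumes lE: "l1 E" and nz: "\<exists>t. E t \<noteq> 0"
  shows "nrm E > 0" and "\<exists>t1. nrm E \<le> norm (E t1) * (2 * Zc * (1 + \<bar>real_of_int t1\<bar>) ^ 2)"
proof -
  obtain t where t: "E t \<noteq> 0" using nz by blast
  have "norm (E t) > 0" using t by simp
  then show np: "nrm E > 0" using norm_le_nrm[OF lE, of t] by linarith
  show "\<exists>t1. nrm E \<le> norm (E t1) * (2 * Zc * (1 + \<bar>real_of_int t1\<bar>) ^ 2)"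
  proof (rule ccontr)
    assume na: "\<not> (\<exists>t1. nrm E \<le> norm (E t1) * (2 * Zc * (1 + \<bar>real_of_int t1\<bar>) ^ 2))"
    have lt: "norm (E s) \<le> nrm E / (2 * Zc) * (1 / (1 + \<bar>real_of_int s\<bar>) ^ 2)" for s
    proof -
      have p: "2 * Zc * (1 + \<bar>real_of_int s\<bar>) ^ 2 > 0" using Zc_pos by simp
      from na have "norm (E s) * (2 * Zc * (1 + \<bar>real_of_int s\<bar>) ^ 2) < nrm E" by (simp add: not_le)
      then show ?thesis using p by (simp add: field_simps)
    qed
    have S1: "(\<lambda>s. nrm E / (2 * Zc) * (1 / (1 + \<bar>real_of_int s\<bar>) ^ 2)) summable_on UNIV"
      by (rule summable_on_cmult_right[OF summable_int_inv_sq])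
    have "infsum (\<lambda>k. norm (E k)) UNIV \<le> infsum (\<lambda>s. nrm E / (2 * Zc) * (1 / (1 + \<bar>real_of_int s\<bar>) ^ 2)) UNIV"
      by (rule infsum_mono[OF lE[unfolded l1_def] S1]) (rule lt)
    then have "nrm E \<le> infsum (\<lambda>s. nrm E / (2 * Zc) * (1 / (1 + \<bar>real_of_int s\<bar>) ^ 2)) UNIV"
      by (simp only: nrm_def)
    also have "\<dots> = nrm E / (2 * Zc) * Zc" unfolding Zc_def
      by (rule infsum_cmult_right')
    also have "\<dots> = nrm E / 2" using Zc_pos by simp
    finally show False using np by simp
  qed
qed

lemma Q_bound:
  assumes pb: "norm (p :: complex) \<le> Cp * y ^ K" and A0: "A \<ge> 0" and Cp: "Cp \<ge> 0" and y1: "y \<ge> 1"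
  shows "1 + norm p * A \<le> (1 + Cp * A) * y ^ K"
proof -
  have "norm p * A \<le> Cp * y ^ K * A" by (intro mult_right_mono pb A0)
  moreover have "1 \<le> y ^ K" using y1 by simp
  ultimately show ?thesis by (simp add: algebra_simps)
qed

lemma rapid_mono:
  assumes "rapid a" "\<And>k. norm (b k) \<le> norm (a k)"
  shows "rapid b"
  unfolding rapid_def
proof
  fix M :: nat
  obtain A where A: "\<forall>k. norm (a k) * (1 + \<bar>real_of_int k\<bar>) ^ M \<le> A" using assms(1) unfolding rapid_def by blast
  have "norm (b k) * (1 + \<bar>real_of_int k\<bar>) ^ M \<le> A" for k
  proof -
    have "norm (b k) * (1 + \<bar>real_of_int k\<bar>) ^ M \<le> norm (a k) * (1 + \<bar>real_of_int k\<bar>) ^ M"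
      by (rule mult_right_mono[OF assms(2)[of k]]) simp
    then show ?thesis using A by (meson order_trans)
  qed
  then show "\<exists>A. \<forall>k. norm (b k) * (1 + \<bar>real_of_int k\<bar>) ^ M \<le> A" by blast
qed

lemma l1_rapid: "rapid a \<Longrightarrow> l1 a"
  using rapid_wsum[of a 0] unfolding l1_def by simp

lemma eig_Lop:
  fixes E d :: "int \<Rightarrow> complex"
  assumes sp: "smooth_periodic c" and lE: "l1 E" and eig: "\<And>t. of_int t * E t = - q * conv d E t"
    and dd: "d = (\<lambda>k. if k = 0 then 0 else fcoef c k)"
  shows "of_int t * (a * E (t - t0)) + q * infsum (\<lambda>s. fcoef c (t - s) * (a * E (s - t0))) UNIV
       = (of_int t0 + q * fcoef c 0) * (a * E (t - t0))"
proof -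
  define c0 where "c0 = fcoef c 0"
  have rc: "rapid (fcoef c)" by (rule fcoef_rapid[OF sp])
  have rd: "rapid d" by (rule rapid_mono[OF rc]) (simp add: dd)
  have ld: "l1 d" by (rule l1_rapid[OF rd])
  have ldel: "l1 (\<lambda>k. c0 * delta k :: complex)" by (intro l1_cmult l1_delta)
  have ceq: "fcoef c = (\<lambda>k. d k + c0 * delta k)"
    by (rule ext) (simp add: dd c0_def delta_def)
  have "infsum (\<lambda>s. fcoef c (t - s) * (a * E (s - t0))) UNIV = a * infsum (\<lambda>s. fcoef c (t - s) * E (s - t0)) UNIV"
    by (simp add: infsum_cmult_right'[symmetric] mult_ac)
  also have "infsum (\<lambda>s. fcoef c (t - s) * E (s - t0)) UNIV = infsum (\<lambda>r. fcoef c (t - (r + t0)) * E (r + t0 - t0)) UNIV"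
    by (rule infsum_shift[symmetric, where f = "\<lambda>s. fcoef c (t - s) * E (s - t0)"])
  also have "\<dots> = conv (fcoef c) E (t - t0)" unfolding conv_def by (simp add: algebra_simps)
  also have "\<dots> = conv d E (t - t0) + c0 * E (t - t0)"
    unfolding ceq conv_add_left[OF ld ldel lE] conv_cmult_left conv_delta_left ..
  finally have I: "infsum (\<lambda>s. fcoef c (t - s) * (a * E (s - t0))) UNIV = a * (conv d E (t - t0) + c0 * E (t - t0))" .
  have e: "of_int (t - t0) * E (t - t0) = - q * conv d E (t - t0)" by (rule eig)
  have "of_int t * (a * E (t - t0)) = a * (of_int (t - t0) * E (t - t0)) + a * (of_int t0 * E (t - t0))"
    by (simp add: algebra_simps)
  then have "of_int t * (a * E (t - t0)) + q * (a * (conv d E (t - t0) + c0 * E (t - t0)))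
      = a * (of_int (t - t0) * E (t - t0) + q * conv d E (t - t0)) + a * (of_int t0 * E (t - t0)) + q * (a * (c0 * E (t - t0)))"
    by (simp add: algebra_simps)
  also have "of_int (t - t0) * E (t - t0) + q * conv d E (t - t0) = 0" using e by simp
  finally show ?thesis unfolding I by (simp add: algebra_simps c0_def)
qed


section \<open>The key lemma: from variable to constant coefficients\<close>

lemma pow_aux: "(a::real) * (a * b ^ 3) ^ 2 = a ^ 3 * b ^ 6" by algebra
lemma powN: "((x::real) * y ^ K) ^ N = x ^ N * y ^ (K * N)" by (simp add: power_mult_distrib power_mult)
lemma pow6: "((x::real) * y ^ K) ^ 6 = x ^ 6 * y ^ (6 * K)" by (simp add: power_mult_distrib power_mult mult.commute)

lemma key_lemma:
  fixes p :: "int ^ ('n::finite) \<Rightarrow> complex"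
  assumes sp: "smooth_periodic c" and pb: "\<And>\<xi>. norm (p \<xi>) \<le> Cp * (1 + inorm \<xi>) ^ K" and Cp: "Cp \<ge> 0"
    and GH: "glob_hypoelliptic (Lop c p)"
  shows "glob_hypoelliptic (Lop (\<lambda>_. fcoef c 0) p)"
  unfolding glob_hypoelliptic_def
proof (intro allI impI)
  fix u :: "'n coeffs"
  assume uu: "distr_coeffs u \<and> smooth_coeffs (Lop (\<lambda>_. fcoef c 0) p u)"
  then have ud: "distr_coeffs u" and su0: "smooth_coeffs (Lop (\<lambda>_. fcoef c 0) p u)" by auto
  define c0 where "c0 = fcoef c 0"
  define sg where "sg k = of_int (fst k) + p (snd k) * c0" for k :: "int \<times> (int ^ 'n)"
  have L0: "Lop (\<lambda>_. c0) p u = (\<lambda>k. sg k * u k)"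
  proof
    fix k :: "int \<times> (int ^ 'n)"
    obtain t \<xi> where k: "k = (t, \<xi>)" by (cases k)
    show "Lop (\<lambda>_. c0) p u k = sg k * u k" unfolding k sg_def by (simp add: Lop_const)
  qed
  have su: "\<exists>C. \<forall>k. norm (sg k * u k) * X k ^ M \<le> C" for M
    using su0 unfolding smooth_iff c0_def[symmetric] L0 by blast
  show "smooth_coeffs u"
  proof (rule ccontr)
    assume ns: "\<not> smooth_coeffs u"
    then obtain N where nN: "\<And>C. \<exists>k. norm (u k) * X k ^ N > C"
      unfolding smooth_iff by (meson not_le)
    obtain C0 N0 where CN0: "\<And>k. norm (u k) \<le> C0 * X k ^ N0" using ud unfolding distr_iff by blast
    have C00: "C0 \<ge> 0"
    proof -
      have "norm (u (0, 0::int^'n)) \<le> C0 * X (0, 0::int^'n) ^ N0" by (rule CN0)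
      then have "0 \<le> C0 * X (0, 0::int^'n) ^ N0" by (rule order_trans[OF norm_ge_zero])
      then show ?thesis by (simp add: zero_le_mult_iff)
    qed
    define S where "S = {k. 1 \<le> norm (u k) * X k ^ N}"
    have sgS: "\<exists>C. \<forall>k\<in>S. norm (sg k) * X k ^ M \<le> C" for M
    proof -
      obtain C where C: "\<And>k. norm (sg k * u k) * X k ^ (M + N) \<le> C" using su[of "M + N"] by blast
      have "norm (sg k) * X k ^ M \<le> C" if "k \<in> S" for k
      proof -
        have "norm (sg k) * X k ^ M = norm (sg k) * X k ^ M * 1" by simp
        also have "\<dots> \<le> norm (sg k) * X k ^ M * (norm (u k) * X k ^ N)"
          using that unfolding S_def by (intro mult_left_mono) auto
        also have "\<dots> = norm (sg k * u k) * X k ^ (M + N)" by (simp add: norm_mult power_add mult_ac)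
        also have "\<dots> \<le> C" by (rule C)
        finally show ?thesis .
      qed
      then show ?thesis by blast
    qed
    have unb: "\<exists>k\<in>S. inorm (snd k) > B" for B
    proof (rule ccontr)
      assume "\<not> (\<exists>k\<in>S. inorm (snd k) > B)"
      then have bnd: "\<And>k. k \<in> S \<Longrightarrow> inorm (snd k) \<le> B" by (meson not_le)
      obtain C1 where C1: "\<And>k. k \<in> S \<Longrightarrow> norm (sg k) * X k ^ 0 \<le> C1" using sgS[of 0] by blast
      define T where "T = C1 + Cp * (1 + B) ^ K * norm c0"
      define Xb where "Xb = (1 + T) * (1 + B)"
      have XS: "X k \<le> Xb" if kS: "k \<in> S" for k
      proof -
        obtain t \<xi> where k: "k = (t, \<xi>)" by (cases k)
        have iB: "inorm \<xi> \<le> B" using bnd[OF kS] k by simp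
        have pB: "norm (p \<xi>) \<le> Cp * (1 + B) ^ K"
        proof -
          have "(1 + inorm \<xi>) ^ K \<le> (1 + B) ^ K" using iB inorm_nonneg[of \<xi>] by (intro power_mono) auto
          then have "Cp * (1 + inorm \<xi>) ^ K \<le> Cp * (1 + B) ^ K" by (rule mult_left_mono[OF _ Cp])
          then show ?thesis using pb[of \<xi>] by linarith
        qed
        have "\<bar>real_of_int t\<bar> = norm (sg k - p \<xi> * c0)" unfolding sg_def k by (simp add: norm_of_int)
        also have "\<dots> \<le> norm (sg k) + norm (p \<xi>) * norm c0" by (metis norm_mult norm_triangle_ineq4)
        also have "\<dots> \<le> C1 + Cp * (1 + B) ^ K * norm c0"
          using C1[OF kS] by (intro add_mono mult_right_mono pB) auto
        finally have tT: "\<bar>real_of_int t\<bar> \<le> T" unfolding T_def .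
        have "X k = (1 + \<bar>real_of_int t\<bar>) * (1 + inorm \<xi>)" unfolding X_def k by simp
        also have "\<dots> \<le> (1 + T) * (1 + B)"
          using tT iB inorm_nonneg[of \<xi>] by (intro mult_mono) auto
        finally show ?thesis unfolding Xb_def .
      qed
      define Cb where "Cb = max 1 (C0 * Xb ^ (N0 + N))"
      have "norm (u k) * X k ^ N \<le> Cb" for k
      proof (cases "k \<in> S")
        case True
        have "norm (u k) * X k ^ N \<le> C0 * X k ^ N0 * X k ^ N" by (intro mult_right_mono CN0) simp
        also have "\<dots> = C0 * X k ^ (N0 + N)" by (simp add: power_add)
        also have "\<dots> \<le> C0 * Xb ^ (N0 + N)"
          using XS[OF True] X_pos[of k] by (intro mult_left_mono power_mono C00) auto
        finally show ?thesis unfolding Cb_def by linarith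
      next
        case False then show ?thesis unfolding S_def Cb_def by auto
      qed
      then show False using nN[of Cb] by (meson not_le)
    qed
    \<comment> \<open>construction of the counterexample\<close>
    define d where "d = (\<lambda>k. if k = 0 then 0 else fcoef c k)"
    define Cc where "Cc = (\<lambda>k. if k = 0 then 0 else fcoef c k / of_int k)"
    have rc: "rapid (fcoef c)" by (rule fcoef_rapid[OF sp])
    have rd: "rapid d" by (rule rapid_mono[OF rc]) (simp add: d_def)
    have rCc: "rapid Cc"
    proof (rule rapid_mono[OF rc])
      fix k :: int
      show "norm (Cc k) \<le> norm (fcoef c k)"
      proof (cases "k = 0")
        case False
        then have n1: "1 \<le> norm (of_int k :: complex)" by (simp add: norm_of_int)
        have "norm (Cc k) = norm (fcoef c k) / norm (of_int k :: complex)"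
          using False unfolding Cc_def by (simp add: norm_divide)
        also have "\<dots> \<le> norm (fcoef c k)"
        proof -
          have "norm (fcoef c k) * 1 \<le> norm (fcoef c k) * norm (of_int k :: complex)"
            by (rule mult_left_mono[OF n1]) simp
          then show ?thesis using n1 by (simp add: pos_divide_le_eq)
        qed
        finally show ?thesis .
      qed (simp add: Cc_def)
    qed
    have ld: "l1 d" and lCc: "l1 Cc" using l1_rapid rd rCc by auto
    have Cd: "of_int k * Cc k = d k" for k by (simp add: Cc_def d_def)
    define P where "P q E \<longleftrightarrow> l1 E \<and> (\<forall>t. of_int t * E t = - q * conv d E t) \<and> (\<exists>t. E t \<noteq> (0::complex))" for q E
    define Ef where "Ef q = (SOME E. P q E)" for q
    have PE: "P q (Ef q)" for q
    proof -
      have ex: "\<exists>E. P q E" using Eexp_exists[OF lCc ld Cd, of q] unfolding P_def by blast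
      show ?thesis unfolding Ef_def by (rule someI_ex[OF ex])
    qed
    have lE: "l1 (Ef q)" and eigE: "\<And>t. of_int t * Ef q t = - q * conv d (Ef q) t" and nzE: "\<exists>t. Ef q t \<noteq> 0" for q
      using PE[of q] unfolding P_def by auto
    define \<kappa> where "\<kappa> = 2 * Zc"
    have \<kappa>0: "\<kappa> > 0" unfolding \<kappa>_def using Zc_pos by simp
    define t1 where "t1 q = (SOME t. nrm (Ef q) \<le> norm (Ef q t) * (\<kappa> * (1 + \<bar>real_of_int t\<bar>) ^ 2))" for q
    have t1: "nrm (Ef q) \<le> norm (Ef q (t1 q)) * (\<kappa> * (1 + \<bar>real_of_int (t1 q)\<bar>) ^ 2)" for q
      unfolding t1_def \<kappa>_def by (rule someI_ex) (rule tau1_exists(2)[OF lE nzE])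
    have npos: "nrm (Ef q) > 0" for q by (rule tau1_exists(1)[OF lE nzE])
    have e1pos: "norm (Ef q (t1 q)) > 0" for q
    proof (rule ccontr)
      assume "\<not> norm (Ef q (t1 q)) > 0"
      then have "norm (Ef q (t1 q)) = 0" by simp
      then show False using t1[of q] npos[of q] by simp
    qed
    define Aw where "Aw R = infsum (\<lambda>k. (1 + \<bar>real_of_int k\<bar>) ^ R * norm (d k)) UNIV" for R
    have Aw0: "Aw R \<ge> 0" for R unfolding Aw_def by (rule infsum_nonneg) simp
    have wp: "(1 + \<bar>real_of_int t\<bar>) ^ R * norm (Ef q t) \<le> (1 + norm q * Aw R) ^ R * nrm (Ef q)" for R t q
      unfolding Aw_def by (rule weighted_pointwise[OF lE rd eigE])
    define Bq where "Bq (q::complex) = \<kappa> ^ 3 * (1 + norm q * Aw 3) ^ 6" for q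
    have t1b: "1 + \<bar>real_of_int (t1 q)\<bar> \<le> \<kappa> * (1 + norm q * Aw 3) ^ 3" for q
    proof -
      define y where "y = 1 + \<bar>real_of_int (t1 q)\<bar>"
      define e where "e = norm (Ef q (t1 q))"
      define n where "n = nrm (Ef q)"
      define Q where "Q = (1 + norm q * Aw 3) ^ 3"
      have y1: "y \<ge> 1" unfolding y_def by simp
      have n0: "n > 0" unfolding n_def by (rule npos)
      have e0: "e \<ge> 0" unfolding e_def by simp
      have h1: "n \<le> e * (\<kappa> * y ^ 2)" unfolding n_def e_def y_def by (rule t1)
      have h2: "y ^ 3 * e \<le> Q * n" unfolding y_def e_def Q_def n_def by (rule wp)
      have "y * n \<le> y * (e * (\<kappa> * y ^ 2))" using h1 y1 by (intro mult_left_mono) auto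
      also have "\<dots> = \<kappa> * (y ^ 3 * e)" by (simp add: power2_eq_square power3_eq_cube mult_ac)
      also have "\<dots> \<le> \<kappa> * (Q * n)" using h2 \<kappa>0 by (intro mult_left_mono) auto
      finally have "y * n \<le> (\<kappa> * Q) * n" by (simp add: mult_ac)
      then have "y \<le> \<kappa> * Q" using n0 by (simp add: mult_le_cancel_right)
      then show ?thesis unfolding y_def Q_def .
    qed
    have nrmB: "nrm (Ef q) \<le> norm (Ef q (t1 q)) * Bq q" for q
    proof -
      have "(1 + \<bar>real_of_int (t1 q)\<bar>) ^ 2 \<le> (\<kappa> * (1 + norm q * Aw 3) ^ 3) ^ 2"
        using t1b[of q] by (intro power_mono) auto
      then have "\<kappa> * (1 + \<bar>real_of_int (t1 q)\<bar>) ^ 2 \<le> \<kappa> * (\<kappa> * (1 + norm q * Aw 3) ^ 3) ^ 2"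
        using \<kappa>0 by (intro mult_left_mono) auto
      also have "\<dots> = Bq q" unfolding Bq_def by (rule pow_aux)
      finally have "norm (Ef q (t1 q)) * (\<kappa> * (1 + \<bar>real_of_int (t1 q)\<bar>) ^ 2) \<le> norm (Ef q (t1 q)) * Bq q"
        by (intro mult_left_mono) auto
      then show ?thesis using t1[of q] by linarith
    qed
    have Qb: "1 + norm (p \<xi>) * Aw R \<le> (1 + Cp * Aw R) * (1 + inorm \<xi>) ^ K" for \<xi> R
      by (rule Q_bound[OF pb Aw0 Cp]) (use inorm_nonneg[of \<xi>] in simp)
    define \<Xi> where "\<Xi> = snd ` S"
    define t0 where "t0 \<xi> = (SOME t. (t, \<xi>) \<in> S)" for \<xi>
    have t0S: "(t0 \<xi>, \<xi>) \<in> S" if "\<xi> \<in> \<Xi>" for \<xi>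
      unfolding t0_def by (rule someI_ex) (use that in \<open>auto simp: \<Xi>_def\<close>)
    define U where "U k = (if snd k \<in> \<Xi> then Ef (p (snd k)) (fst k - t0 (snd k)) / Ef (p (snd k)) (t1 (p (snd k))) else 0)"
      for k :: "int \<times> (int ^ 'n)"
    have LU: "Lop c p U k = (if snd k \<in> \<Xi> then sg (t0 (snd k), snd k) * U k else 0)" for k
    proof -
      obtain t \<xi> where k: "k = (t, \<xi>)" by (cases k)
      show ?thesis
      proof (cases "\<xi> \<in> \<Xi>")
        case False
        then show ?thesis unfolding k Lop_def U_def by simp
      next
        case True
        define q where "q = p \<xi>"
        define a where "a = inverse (Ef q (t1 q))"
        have Us: "U (s, \<xi>) = a * Ef q (s - t0 \<xi>)" for s
          unfolding U_def a_def q_def using True by (simp add: divide_inverse mult.commute)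
        have "Lop c p U (t, \<xi>) = of_int t * (a * Ef q (t - t0 \<xi>)) + q * infsum (\<lambda>s. fcoef c (t - s) * (a * Ef q (s - t0 \<xi>))) UNIV"
          unfolding Lop_def by (simp add: Us q_def)
        also have "\<dots> = (of_int (t0 \<xi>) + q * fcoef c 0) * (a * Ef q (t - t0 \<xi>))"
          by (rule eig_Lop[OF sp lE eigE d_def])
        also have "\<dots> = sg (t0 \<xi>, \<xi>) * U (t, \<xi>)" by (simp only: Us sg_def c0_def q_def fst_conv snd_conv)
        finally show ?thesis using True k by simp
      qed
    qed
    have Ud: "distr_coeffs U"
      unfolding distr_iff
    proof (intro exI allI)
      fix k :: "int \<times> (int ^ 'n)"
      show "norm (U k) \<le> \<kappa> ^ 3 * (1 + Cp * Aw 3) ^ 6 * X k ^ (6 * K)"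
      proof (cases "snd k \<in> \<Xi>")
        case False
        then show ?thesis unfolding U_def using \<kappa>0 Aw0[of 3] Cp by simp
      next
        case True
        define q where "q = p (snd k)"
        have e1: "norm (Ef q (t1 q)) > 0" by (rule e1pos)
        have "norm (U k) = norm (Ef q (fst k - t0 (snd k))) / norm (Ef q (t1 q))"
          unfolding U_def q_def using True by (simp add: norm_divide)
        also have "\<dots> \<le> nrm (Ef q) / norm (Ef q (t1 q))"
          using e1 by (intro divide_right_mono norm_le_nrm lE) auto
        also have "\<dots> \<le> Bq q" using nrmB[of q] e1 by (simp add: divide_le_eq mult.commute)
        also have "\<dots> \<le> \<kappa> ^ 3 * ((1 + Cp * Aw 3) * (1 + inorm (snd k)) ^ K) ^ 6"
          unfolding Bq_def q_def using \<kappa>0 Qb[of "snd k" 3] Aw0[of 3]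
          by (intro mult_left_mono power_mono) auto
        also have "\<dots> = \<kappa> ^ 3 * (1 + Cp * Aw 3) ^ 6 * ((1 + inorm (snd k)) ^ (6 * K))"
          by (simp add: pow6)
        also have "\<dots> \<le> \<kappa> ^ 3 * (1 + Cp * Aw 3) ^ 6 * X k ^ (6 * K)"
          using inorm_le_X[of k] inorm_nonneg[of "snd k"] \<kappa>0 Cp Aw0[of 3]
          by (intro mult_left_mono power_mono) auto
        finally show ?thesis .
      qed
    qed
    have LUs: "smooth_coeffs (Lop c p U)"
      unfolding smooth_iff
    proof
      fix N1 :: nat
      define M where "M = K * N1 + 6 * K + N1"
      obtain Cs where Cs: "\<And>k. k \<in> S \<Longrightarrow> norm (sg k) * X k ^ M \<le> Cs" using sgS[of M] by blast
      define \<Lambda> where "\<Lambda> = (1 + Cp * Aw N1) ^ N1 * (\<kappa> ^ 3 * (1 + Cp * Aw 3) ^ 6)"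
      have \<Lambda>0: "\<Lambda> \<ge> 0" unfolding \<Lambda>_def using \<kappa>0 Cp Aw0 by simp
      have "norm (Lop c p U k) * X k ^ N1 \<le> max (\<Lambda> * Cs) 0" for k
      proof (cases "snd k \<in> \<Xi>")
        case False
        then show ?thesis unfolding LU by simp
      next
        case True
        obtain t \<xi> where k: "k = (t, \<xi>)" by (cases k)
        have \<xi>: "\<xi> \<in> \<Xi>" using True k by simp
        define q where "q = p \<xi>"
        define E where "E = Ef q"
        define e1 where "e1 = norm (E (t1 q))"
        define s0 where "s0 = t0 \<xi>"
        define y where "y = 1 + inorm \<xi>"
        have y1: "y \<ge> 1" unfolding y_def using inorm_nonneg[of \<xi>] by simp
        have e1p: "e1 > 0" unfolding e1_def E_def by (rule e1pos)
        have nU: "norm (U k) = norm (E (t - s0)) / e1"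
          unfolding U_def E_def e1_def s0_def q_def k using \<xi> by (simp add: norm_divide)
        have wE: "(1 + \<bar>real_of_int (t - s0)\<bar>) ^ N1 * norm (E (t - s0)) \<le> (1 + norm q * Aw N1) ^ N1 * nrm E"
          unfolding E_def by (rule wp)
        have XN: "X k ^ N1 \<le> (1 + \<bar>real_of_int (t - s0)\<bar>) ^ N1 * ((1 + \<bar>real_of_int s0\<bar>) ^ N1 * y ^ N1)"
        proof -
          have "X k = (1 + \<bar>real_of_int t\<bar>) * y" unfolding X_def k y_def by simp
          also have "\<dots> \<le> ((1 + \<bar>real_of_int (t - s0)\<bar>) * (1 + \<bar>real_of_int s0\<bar>)) * y"
            using y1 by (intro mult_right_mono peetre1) auto
          finally have "X k ^ N1 \<le> (((1 + \<bar>real_of_int (t - s0)\<bar>) * (1 + \<bar>real_of_int s0\<bar>)) * y) ^ N1"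
            using X_pos[of k] by (intro power_mono) auto
          then show ?thesis by (simp add: power_mult_distrib mult_ac)
        qed
        have A1: "norm (E (t - s0)) * X k ^ N1 \<le> (1 + norm q * Aw N1) ^ N1 * nrm E * ((1 + \<bar>real_of_int s0\<bar>) ^ N1 * y ^ N1)"
        proof -
          have "norm (E (t - s0)) * X k ^ N1 \<le> norm (E (t - s0)) * ((1 + \<bar>real_of_int (t - s0)\<bar>) ^ N1 * ((1 + \<bar>real_of_int s0\<bar>) ^ N1 * y ^ N1))"
            by (intro mult_left_mono XN) auto
          also have "\<dots> = ((1 + \<bar>real_of_int (t - s0)\<bar>) ^ N1 * norm (E (t - s0))) * ((1 + \<bar>real_of_int s0\<bar>) ^ N1 * y ^ N1)"
            by (simp add: mult_ac)
          also have "\<dots> \<le> (1 + norm q * Aw N1) ^ N1 * nrm E * ((1 + \<bar>real_of_int s0\<bar>) ^ N1 * y ^ N1)"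
            using y1 by (intro mult_right_mono wE) auto
          finally show ?thesis .
        qed
        have A2: "nrm E \<le> e1 * (\<kappa> ^ 3 * (1 + Cp * Aw 3) ^ 6 * y ^ (6 * K))"
        proof -
          have "Bq q \<le> \<kappa> ^ 3 * ((1 + Cp * Aw 3) * y ^ K) ^ 6"
            unfolding Bq_def q_def y_def using \<kappa>0 Qb[of \<xi> 3] Aw0[of 3]
            by (intro mult_left_mono power_mono) auto
          also have "\<dots> = \<kappa> ^ 3 * (1 + Cp * Aw 3) ^ 6 * y ^ (6 * K)"
            by (simp add: pow6)
          finally have "e1 * Bq q \<le> e1 * (\<kappa> ^ 3 * (1 + Cp * Aw 3) ^ 6 * y ^ (6 * K))"
            using e1p by (intro mult_left_mono) auto
          then show ?thesis using nrmB[of q] unfolding E_def e1_def by linarith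
        qed
        have A3: "(1 + norm q * Aw N1) ^ N1 \<le> (1 + Cp * Aw N1) ^ N1 * y ^ (K * N1)"
        proof -
          have "(1 + norm q * Aw N1) ^ N1 \<le> ((1 + Cp * Aw N1) * y ^ K) ^ N1"
            unfolding q_def y_def using Qb[of \<xi> N1] Aw0[of N1] by (intro power_mono) auto
          then show ?thesis by (simp only: powN)
        qed
        have A4: "(1 + \<bar>real_of_int s0\<bar>) ^ N1 * y ^ (K * N1 + 6 * K + N1) \<le> X (s0, \<xi>) ^ M"
        proof -
          have "(1 + \<bar>real_of_int s0\<bar>) ^ N1 \<le> (1 + \<bar>real_of_int s0\<bar>) ^ M"
            unfolding M_def by (intro power_increasing) auto
          then have "(1 + \<bar>real_of_int s0\<bar>) ^ N1 * y ^ M \<le> (1 + \<bar>real_of_int s0\<bar>) ^ M * y ^ M"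
            using y1 by (intro mult_right_mono) auto
          also have "\<dots> = X (s0, \<xi>) ^ M" unfolding X_def y_def by (simp add: power_mult_distrib)
          finally show ?thesis unfolding M_def .
        qed
        define W where "W = (1 + \<bar>real_of_int s0\<bar>) ^ N1 * y ^ N1"
        define Bs where "Bs = \<kappa> ^ 3 * (1 + Cp * Aw 3) ^ 6"
        have W0: "W \<ge> 0" unfolding W_def using y1 by simp
        have Bs0: "Bs \<ge> 0" unfolding Bs_def using \<kappa>0 Cp Aw0[of 3] by simp
        define R where "R = (1 + norm q * Aw N1) ^ N1 * (Bs * y ^ (6 * K)) * W"
        have ER: "norm (E (t - s0)) * X k ^ N1 \<le> e1 * R"
        proof -
          have "norm (E (t - s0)) * X k ^ N1 \<le> (1 + norm q * Aw N1) ^ N1 * nrm E * W"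
            using A1 unfolding W_def .
          also have "\<dots> \<le> (1 + norm q * Aw N1) ^ N1 * (e1 * (Bs * y ^ (6 * K))) * W"
            using A2 W0 Aw0[of N1] unfolding Bs_def by (intro mult_right_mono mult_left_mono) auto
          also have "\<dots> = e1 * R" unfolding R_def by (simp add: mult_ac)
          finally show ?thesis .
        qed
        have RL: "R \<le> \<Lambda> * ((1 + \<bar>real_of_int s0\<bar>) ^ N1 * y ^ (K * N1 + 6 * K + N1))"
        proof -
          have "R \<le> ((1 + Cp * Aw N1) ^ N1 * y ^ (K * N1)) * (Bs * y ^ (6 * K)) * W"
            unfolding R_def using A3 Bs0 W0 y1 by (intro mult_right_mono) auto
          also have "\<dots> = \<Lambda> * ((1 + \<bar>real_of_int s0\<bar>) ^ N1 * y ^ (K * N1 + 6 * K + N1))"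
            unfolding \<Lambda>_def Bs_def W_def by (simp add: power_add mult_ac)
          finally show ?thesis .
        qed
        have "norm (Lop c p U k) * X k ^ N1 = norm (sg (s0, \<xi>)) * (norm (E (t - s0)) * X k ^ N1) / e1"
          unfolding LU using True k nU s0_def by (simp add: norm_mult)
        also have "\<dots> \<le> norm (sg (s0, \<xi>)) * (e1 * R) / e1"
          using ER e1p by (intro divide_right_mono mult_left_mono) auto
        also have "\<dots> = norm (sg (s0, \<xi>)) * R" using e1p by simp
        also have "\<dots> \<le> norm (sg (s0, \<xi>)) * (\<Lambda> * ((1 + \<bar>real_of_int s0\<bar>) ^ N1 * y ^ (K * N1 + 6 * K + N1)))"
          using RL by (intro mult_left_mono) auto
        also have "\<dots> = \<Lambda> * (norm (sg (s0, \<xi>)) * ((1 + \<bar>real_of_int s0\<bar>) ^ N1 * y ^ (K * N1 + 6 * K + N1)))"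
          by (simp add: mult_ac)
        also have "\<dots> \<le> \<Lambda> * (norm (sg (s0, \<xi>)) * X (s0, \<xi>) ^ M)"
          using A4 \<Lambda>0 by (intro mult_left_mono) auto
        also have "\<dots> \<le> \<Lambda> * Cs"
          using Cs[OF t0S[OF \<xi>]] \<Lambda>0 unfolding s0_def by (intro mult_left_mono) auto
        finally show ?thesis by linarith
      qed
      then show "\<exists>C. \<forall>k. norm (Lop c p U k) * X k ^ N1 \<le> C" by blast
    qed
    have "smooth_coeffs U" using GH Ud LUs unfolding glob_hypoelliptic_def by blast
    then obtain Cu where Cu: "\<And>k. norm (U k) * X k ^ 1 \<le> Cu" unfolding smooth_iff by blast
    obtain k where kS: "k \<in> S" and kB: "inorm (snd k) > Cu" using unb[of Cu] by blast
    define \<xi> where "\<xi> = snd k"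
    have \<xi>: "\<xi> \<in> \<Xi>" unfolding \<Xi>_def \<xi>_def using kS by blast
    define q where "q = p \<xi>"
    have "U (t1 q + t0 \<xi>, \<xi>) = 1" unfolding U_def q_def using \<xi> e1pos[of "p \<xi>"] by auto
    then have "X (t1 q + t0 \<xi>, \<xi>) \<le> Cu" using Cu[of "(t1 q + t0 \<xi>, \<xi>)"] by simp
    moreover have "1 + inorm \<xi> \<le> X (t1 q + t0 \<xi>, \<xi>)" using inorm_le_X[of "(t1 q + t0 \<xi>, \<xi>)"] by simp
    ultimately show False using kB unfolding \<xi>_def by linarith
  qed
qed


section \<open>Products of operators\<close>

lemma Lop_maps:
  fixes p :: "int ^ ('n::finite) \<Rightarrow> complex"
  assumes sp: "smooth_periodic c" and sy: "\<exists>C>0. \<forall>\<xi>. \<xi> \<noteq> 0 \<longrightarrow> norm (p \<xi>) \<le> C * inorm \<xi> powr \<nu>"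
  shows "\<forall>u. distr_coeffs u \<longrightarrow> distr_coeffs (Lop c p u)"
    and "\<forall>u. smooth_coeffs u \<longrightarrow> smooth_coeffs (Lop c p u)"
    and "\<forall>u. distr_coeffs u \<longrightarrow> distr_coeffs (Lop (\<lambda>_. fcoef c 0) p u)"
    and "glob_hypoelliptic (Lop c p) \<Longrightarrow> glob_hypoelliptic (Lop (\<lambda>_. fcoef c 0) p)"
proof -
  obtain Cp K where Cp: "Cp \<ge> 0" and pb: "\<And>\<xi>. norm (p \<xi>) \<le> Cp * (1 + inorm \<xi>) ^ K"
    using symb_poly[OF sy] by blast
  show "\<forall>u. distr_coeffs u \<longrightarrow> distr_coeffs (Lop c p u)" using Lop_distr[OF sp pb Cp] by blast
  show "\<forall>u. smooth_coeffs u \<longrightarrow> smooth_coeffs (Lop c p u)" using Lop_smooth[OF sp pb Cp] by blast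
  show "\<forall>u. distr_coeffs u \<longrightarrow> distr_coeffs (Lop (\<lambda>_. fcoef c 0) p u)"
    using Lop_distr[OF smooth_periodic_const pb Cp] by blast
  show "glob_hypoelliptic (Lop c p) \<Longrightarrow> glob_hypoelliptic (Lop (\<lambda>_. fcoef c 0) p)"
    by (rule key_lemma[OF sp pb Cp])
qed

lemma Lprod_Suc_apply: "Lprod L (Suc k) u = Lprod L k (L (Suc k) u)"
  by simp

lemma Lprod_pres:
  assumes "\<forall>j\<in>{1..m}. \<forall>u. Pr u \<longrightarrow> Pr (L j u)"
  shows "Pr u \<Longrightarrow> Pr (Lprod L m u)"
  using assms
proof (induction m arbitrary: u)
  case 0 then show ?case by simp
next
  case (Suc m)
  have "Pr (L (Suc m) u)" using Suc.prems by auto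
  moreover have "\<forall>j\<in>{1..m}. \<forall>u. Pr u \<longrightarrow> Pr (L j u)" using Suc.prems by auto
  ultimately have "Pr (Lprod L m (L (Suc m) u))" using Suc.IH by blast
  then show ?case by simp
qed

lemma Lprod_GH:
  fixes L :: "nat \<Rightarrow> ('n::finite) coeffs \<Rightarrow> 'n coeffs"
  assumes "\<forall>j\<in>{1..m}. glob_hypoelliptic (L j) \<and> (\<forall>u. distr_coeffs u \<longrightarrow> distr_coeffs (L j u))"
  shows "glob_hypoelliptic (Lprod L m)"
  using assms
proof (induction m)
  case 0 then show ?case by (simp add: glob_hypoelliptic_def)
next
  case (Suc m)
  have IH: "glob_hypoelliptic (Lprod L m)" using Suc by auto
  have G: "glob_hypoelliptic (L (Suc m))" and D: "\<forall>u. distr_coeffs u \<longrightarrow> distr_coeffs (L (Suc m) u)"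
    using Suc.prems by auto
  show ?case unfolding glob_hypoelliptic_def
  proof (intro allI impI)
    fix u assume u: "distr_coeffs u \<and> smooth_coeffs (Lprod L (Suc m) u)"
    then have "distr_coeffs (L (Suc m) u)" and "smooth_coeffs (Lprod L m (L (Suc m) u))" using D by auto
    then have "smooth_coeffs (L (Suc m) u)" using IH unfolding glob_hypoelliptic_def by blast
    then show "smooth_coeffs u" using G u unfolding glob_hypoelliptic_def by blast
  qed
qed

lemma Lprod_factor:
  fixes L :: "nat \<Rightarrow> ('n::finite) coeffs \<Rightarrow> 'n coeffs"
  assumes D: "\<forall>j\<in>{1..m}. \<forall>u. distr_coeffs u \<longrightarrow> distr_coeffs (L j u)"
    and S: "\<forall>j\<in>{1..m}. \<forall>u. smooth_coeffs u \<longrightarrow> smooth_coeffs (L j u)"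
    and C: "\<forall>j\<in>{1..m}. \<forall>k\<in>{1..m}. \<forall>u. distr_coeffs u \<longrightarrow> L j (L k u) = L k (L j u)"
    and k: "k \<in> {1..m}"
  shows "\<exists>Q. (\<forall>v. smooth_coeffs v \<longrightarrow> smooth_coeffs (Q v)) \<and> (\<forall>u. distr_coeffs u \<longrightarrow> Lprod L m u = Q (L k u))"
  using D S C k
proof (induction m)
  case 0 then show ?case by simp
next
  case (Suc m)
  show ?case
  proof (cases "k = Suc m")
    case True
    have "\<forall>j\<in>{1..m}. \<forall>u. smooth_coeffs u \<longrightarrow> smooth_coeffs (L j u)" using Suc.prems by auto
    then have "\<forall>v. smooth_coeffs v \<longrightarrow> smooth_coeffs (Lprod L m v)" using Lprod_pres[of m smooth_coeffs L] by blast
    moreover have "\<forall>u. distr_coeffs u \<longrightarrow> Lprod L (Suc m) u = Lprod L m (L k u)" using True by simp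
    ultimately show ?thesis by blast
  next
    case False
    then have km: "k \<in> {1..m}" using Suc.prems(4) by auto
    obtain Q where Q1: "\<forall>v. smooth_coeffs v \<longrightarrow> smooth_coeffs (Q v)"
      and Q2: "\<forall>u. distr_coeffs u \<longrightarrow> Lprod L m u = Q (L k u)"
      using Suc.IH Suc.prems km by auto
    have "\<forall>v. smooth_coeffs v \<longrightarrow> smooth_coeffs ((Q \<circ> L (Suc m)) v)" using Q1 Suc.prems(2) by auto
    moreover have "Lprod L (Suc m) u = (Q \<circ> L (Suc m)) (L k u)" if u: "distr_coeffs u" for u
    proof -
      have "distr_coeffs (L (Suc m) u)" using u Suc.prems(1) by auto
      then have "Lprod L (Suc m) u = Q (L k (L (Suc m) u))" using Q2 by simp
      also have "L k (L (Suc m) u) = L (Suc m) (L k u)" using Suc.prems(3) km u by auto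
      finally show ?thesis by simp
    qed
    ultimately show ?thesis by blast
  qed
qed

theorem theorem5:
  fixes c :: "nat \<Rightarrow> real \<Rightarrow> complex"
    and p :: "nat \<Rightarrow> int ^ 'n \<Rightarrow> complex"
    and \<nu> :: "nat \<Rightarrow> real"
    and m :: nat
  assumes smooth: "\<forall>j\<in>{1..m}. smooth_periodic (c j)"
    and symb: "\<forall>j\<in>{1..m}. \<exists>C>0. \<forall>\<xi>. \<xi> \<noteq> 0 \<longrightarrow> norm (p j \<xi>) \<le> C * inorm \<xi> powr \<nu> j"
    and comm: "\<forall>j\<in>{1..m}. \<forall>k\<in>{1..m}. \<forall>u::'n coeffs. distr_coeffs u \<longrightarrow>
                 Lop (c j) (p j) (Lop (c k) (p k) u) = Lop (c k) (p k) (Lop (c j) (p j) u)"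
  shows "(glob_hypoelliptic (Lprod (\<lambda>j. Lop (c j) (p j)) m) \<longleftrightarrow>
            (\<forall>k\<in>{1..m}. glob_hypoelliptic (Lop (c k) (p k))))
       \<and> (glob_hypoelliptic (Lprod (\<lambda>j. Lop (c j) (p j)) m) \<longrightarrow>
            glob_hypoelliptic (Lprod (\<lambda>j. Lop (\<lambda>_. fcoef (c j) 0) (p j)) m))"
proof -
  define L where "L j = Lop (c j) (p j)" for j
  have M: "\<And>j. j \<in> {1..m} \<Longrightarrow>
      (\<forall>u. distr_coeffs u \<longrightarrow> distr_coeffs (Lop (c j) (p j) u)) \<and>
      (\<forall>u. smooth_coeffs u \<longrightarrow> smooth_coeffs (Lop (c j) (p j) u)) \<and>
      (\<forall>u. distr_coeffs u \<longrightarrow> distr_coeffs (Lop (\<lambda>_. fcoef (c j) 0) (p j) u)) \<and>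
      (glob_hypoelliptic (Lop (c j) (p j)) \<longrightarrow> glob_hypoelliptic (Lop (\<lambda>_. fcoef (c j) 0) (p j)))"
  proof -
    fix j assume j: "j \<in> {1..m}"
    have sp: "smooth_periodic (c j)" using smooth j by blast
    have sy: "\<exists>C>0. \<forall>\<xi>. \<xi> \<noteq> 0 \<longrightarrow> norm (p j \<xi>) \<le> C * inorm \<xi> powr \<nu> j" using symb j by blast
    show "?thesis j" using Lop_maps[OF sp sy] by blast
  qed
  have D: "\<forall>j\<in>{1..m}. \<forall>u. distr_coeffs u \<longrightarrow> distr_coeffs (L j u)" using M unfolding L_def by blast
  have S: "\<forall>j\<in>{1..m}. \<forall>u. smooth_coeffs u \<longrightarrow> smooth_coeffs (L j u)" using M unfolding L_def by blast
  have C: "\<forall>j\<in>{1..m}. \<forall>k\<in>{1..m}. \<forall>u. distr_coeffs u \<longrightarrow> L j (L k u) = L k (L j u)"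
    using comm unfolding L_def by blast
  have Lf: "(\<lambda>j. Lop (c j) (p j)) = L" unfolding L_def ..
  have fwd: "glob_hypoelliptic (L k)" if G: "glob_hypoelliptic (Lprod L m)" and k: "k \<in> {1..m}" for k
  proof -
    obtain Q where Q1: "\<forall>v. smooth_coeffs v \<longrightarrow> smooth_coeffs (Q v)"
      and Q2: "\<forall>u. distr_coeffs u \<longrightarrow> Lprod L m u = Q (L k u)"
      using Lprod_factor[OF D S C k] by blast
    show ?thesis unfolding glob_hypoelliptic_def
    proof (intro allI impI)
      fix u assume u: "distr_coeffs u \<and> smooth_coeffs (L k u)"
      then have "smooth_coeffs (Lprod L m u)" using Q1 Q2 by auto
      then show "smooth_coeffs u" using G u unfolding glob_hypoelliptic_def by blast
    qed
  qed
  have bwd: "glob_hypoelliptic (Lprod L m)" if "\<forall>k\<in>{1..m}. glob_hypoelliptic (L k)"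
    by (rule Lprod_GH) (use that D in blast)
  have b: "glob_hypoelliptic (Lprod (\<lambda>j. Lop (\<lambda>_. fcoef (c j) 0) (p j)) m)" if G: "glob_hypoelliptic (Lprod L m)"
  proof (rule Lprod_GH, intro ballI conjI)
    fix j assume j: "j \<in> {1..m}"
    have "glob_hypoelliptic (L j)" by (rule fwd[OF G j])
    then show "glob_hypoelliptic (Lop (\<lambda>_. fcoef (c j) 0) (p j))" using M[OF j] unfolding L_def by blast
    show "\<forall>u. distr_coeffs u \<longrightarrow> distr_coeffs (Lop (\<lambda>_. fcoef (c j) 0) (p j) u)" using M[OF j] by blast
  qed
  have eqk: "\<And>k. Lop (c k) (p k) = L k" by (simp add: L_def)
  show ?thesis unfolding Lf eqk using fwd bwd b by blast
qed

end
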